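(* Let $T:L_2[a,b]^p\to L_2[a,b]^q$ be a bounded integral operator with continuous kernel function, let $\hat T$ be an estimator of $T$ which is a.s. an integral operator with continuous kernel (with adjoint $\hat T^*$), let $(\alpha_n)$ be positive reals, and suppose that $(\varphi,T)$ ranges over the source class $\mathcal F=\mathcal F(t,\beta,C)$. If $\mathbb E\|\hat T^*-T^*\|_{2,\infty}^2$ is bounded uniformly over $\mathcal F$, then for all $n$ and all $(\varphi,T)\in\mathcal F$, $$\mathbb E\left\|\left[(\alpha_nI+\hat T^*\hat T)^{-1}\hat T^*\hat T-(\alpha_nI+T^*T)^{-1}T^*T\right]\varphi\right\|_\infty=O\left(\sqrt{\alpha_n^{-1}\mathbb E\|\hat T^*-T^*\|^2_{2,\infty}}\right).$$
   Context: $\|\cdot\|$: $L_2$ norm; $\|\cdot\|_\infty$: sup norm; $\|A\|_{2,\infty}=\sup_{\|\psi\|\le1}\|A\psi\|_\infty$ for operators from $L_2$ into continuous functions. Hölder class $C^t_M[a,b]^p$ ($t\ge0$): continuous $g$ with $\|g^{(k)}\|_\infty\le M$ for $|k|\le\lfloor t\rfloor$ and $|g^{(k)}(z)-g^{(k)}(z')|\le M\|z-z'\|^{t-\lfloor t\rfloor}$ for $|k|=\lfloor t\rfloor$. Source class $\mathcal F(t,\beta,C)$ ($\beta,C>0$): pairs $(\varphi,T)$ with $\varphi\in C^t_M[a,b]^p$, $T^*$ bounded from $L_2[a,b]^q$ into continuous functions, $\varphi=(T^*T)^\beta T^*\psi$ for some $\psi\in L_2[a,b]^q$, and $\|T^*\|_{2,\infty}\vee\|\psi\|\vee\|T\|^{-1}\le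 C$. The $O(\cdot)$ constant does not depend on $n$ or on $(\varphi,T)\in\mathcal F$. *)

theory Defs
  imports "HOL-Analysis.Analysis" "HOL-Probability.Probability_Measure"
begin

definition cube :: "real \<Rightarrow> real \<Rightarrow> (real^'n) set" where
  "cube a b = {x. \<forall>i. a \<le> x $ i \<and> x $ i \<le> b}"

definition sqint :: "'a::euclidean_space set \<Rightarrow> ('a \<Rightarrow> real) \<Rightarrow> bool" where
  "sqint S f \<longleftrightarrow> f \<in> borel_measurable (lebesgue_on S) \<and>
                  integrable (lebesgue_on S) (\<lambda>x. (f x)^2)"

definition ip :: "'a::euclidean_space set \<Rightarrow> ('a \<Rightarrow> real) \<Rightarrow> ('a \<Rightarrow> real) \<Rightarrow> real" where
  "ip S f g = (\<integral>x. f x * g x \<partial>lebesgue_on S)"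

definition L2norm :: "'a::euclidean_space set \<Rightarrow> ('a \<Rightarrow> real) \<Rightarrow> real" where
  "L2norm S f = sqrt (\<integral>x. (f x)^2 \<partial>lebesgue_on S)"

definition L2_sums :: "'a::euclidean_space set \<Rightarrow> (nat \<Rightarrow> real) \<Rightarrow> (nat \<Rightarrow> 'a \<Rightarrow> real)
    \<Rightarrow> ('a \<Rightarrow> real) \<Rightarrow> bool" where
  "L2_sums S c e h \<longleftrightarrow> (\<lambda>N. L2norm S (\<lambda>x. h x - (\<Sum>j<N. c j * e j x))) \<longlonglongrightarrow> 0"

text \<open>Sup norm over S (ennreal-valued, so always well defined).\<close>
definition supn :: "'a set \<Rightarrow> ('a \<Rightarrow> real) \<Rightarrow> ennreal" where
  "supn S f = (SUP x\<in>S. ennreal \<bar>f x\<bar>)"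

definition Top :: "'p::euclidean_space set \<Rightarrow> ('q \<Rightarrow> 'p \<Rightarrow> real) \<Rightarrow> ('p \<Rightarrow> real) \<Rightarrow> 'q \<Rightarrow> real" where
  "Top Sp k \<phi> w = (\<integral>z. k w z * \<phi> z \<partial>lebesgue_on Sp)"

definition Tadj :: "'q::euclidean_space set \<Rightarrow> ('q \<Rightarrow> 'p \<Rightarrow> real) \<Rightarrow> ('q \<Rightarrow> real) \<Rightarrow> 'p \<Rightarrow> real" where
  "Tadj Sq k \<psi> z = (\<integral>w. k w z * \<psi> w \<partial>lebesgue_on Sq)"

definition cont_kernel :: "'q::topological_space set \<Rightarrow> 'p::topological_space set
    \<Rightarrow> ('q \<Rightarrow> 'p \<Rightarrow> real) \<Rightarrow> bool" where
  "cont_kernel Sq Sp k \<longleftrightarrow> continuous_on (Sq \<times> Sp) (\<lambda>(w,z). k w z)"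

definition norm_2inf :: "'q::euclidean_space set \<Rightarrow> 'p::euclidean_space set
    \<Rightarrow> ('q \<Rightarrow> 'p \<Rightarrow> real) \<Rightarrow> ennreal" where
  "norm_2inf Sq Sp k =
     (SUP \<psi>\<in>{\<psi>. sqint Sq \<psi> \<and> L2norm Sq \<psi> \<le> 1}. supn Sp (Tadj Sq k \<psi>))"

definition opnorm_L2 :: "'p::euclidean_space set \<Rightarrow> 'q::euclidean_space set
    \<Rightarrow> ('q \<Rightarrow> 'p \<Rightarrow> real) \<Rightarrow> ennreal" where
  "opnorm_L2 Sp Sq k =
     (SUP \<phi>\<in>{\<phi>. sqint Sp \<phi> \<and> L2norm Sp \<phi> \<le> 1}. ennreal (L2norm Sq (Top Sp k \<phi>)))"

definition eigsys :: "'a::euclidean_space set \<Rightarrow> (('a \<Rightarrow> real) \<Rightarrow> ('a \<Rightarrow> real))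
    \<Rightarrow> (nat \<Rightarrow> 'a \<Rightarrow> real) \<Rightarrow> (nat \<Rightarrow> real) \<Rightarrow> bool" where
  "eigsys S A e lam \<longleftrightarrow>
     (\<forall>j. sqint S (e j) \<and> 0 \<le> lam j) \<and>
     (\<forall>i j. ip S (e i) (e j) = (if i = j then 1 else 0)) \<and>
     (\<forall>f. sqint S f \<longrightarrow> L2_sums S (\<lambda>j. lam j * ip S f (e j)) e (A f))"

definition is_power_image :: "'a::euclidean_space set \<Rightarrow> (('a \<Rightarrow> real) \<Rightarrow> ('a \<Rightarrow> real))
    \<Rightarrow> real \<Rightarrow> ('a \<Rightarrow> real) \<Rightarrow> ('a \<Rightarrow> real) \<Rightarrow> bool" where
  "is_power_image S A \<beta> g \<phi> \<longleftrightarrow>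
     (\<exists>e lam. eigsys S A e lam \<and> L2_sums S (\<lambda>j. lam j powr \<beta> * ip S g (e j)) e \<phi>)"

definition pd :: "(real^'n) set \<Rightarrow> 'n \<Rightarrow> (real^'n \<Rightarrow> real) \<Rightarrow> real^'n \<Rightarrow> real" where
  "pd S i f x = vector_derivative (\<lambda>h. f (x + h *\<^sub>R axis i 1))
                  (at 0 within {h. x + h *\<^sub>R axis i 1 \<in> S})"

fun Dpar :: "(real^'n) set \<Rightarrow> 'n list \<Rightarrow> (real^'n \<Rightarrow> real) \<Rightarrow> real^'n \<Rightarrow> real" where
  "Dpar S [] f = f"
| "Dpar S (i # is) f = pd S i (Dpar S is f)"

definition holder :: "(real^'n) set \<Rightarrow> real \<Rightarrow> real \<Rightarrow> (real^'n \<Rightarrow> real) \<Rightarrow> bool" where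
  "holder S t L g \<longleftrightarrow>
     continuous_on S g \<and>
     (\<forall>ks i. length ks < nat \<lfloor>t\<rfloor> \<longrightarrow> (\<forall>x\<in>S.
         (\<lambda>h. Dpar S ks g (x + h *\<^sub>R axis i 1)) differentiable
            (at 0 within {h. x + h *\<^sub>R axis i 1 \<in> S}))) \<and>
     (\<forall>ks. length ks \<le> nat \<lfloor>t\<rfloor> \<longrightarrow> (\<forall>x\<in>S. \<bar>Dpar S ks g x\<bar> \<le> L)) \<and>
     (\<forall>ks. length ks = nat \<lfloor>t\<rfloor> \<longrightarrow> (\<forall>x\<in>S. \<forall>y\<in>S.
         \<bar>Dpar S ks g x - Dpar S ks g y\<bar> \<le> L * dist x y powr (t - of_int \<lfloor>t\<rfloor>)))"

section \<open>Source class F(t,beta,C); T is represented by its continuous kernel k\<close>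

definition src_class :: "real \<Rightarrow> real \<Rightarrow> real \<Rightarrow> real \<Rightarrow> real \<Rightarrow> real
    \<Rightarrow> ((real^'p \<Rightarrow> real) \<times> (real^'q \<Rightarrow> real^'p \<Rightarrow> real)) set" where
  "src_class a b t L \<beta> C = {(\<phi>, k).
     cont_kernel (cube a b) (cube a b) k \<and>
     holder (cube a b) t L \<phi> \<and>
     (\<exists>\<psi>. sqint (cube a b) \<psi> \<and> L2norm (cube a b) \<psi> \<le> C \<and>
          is_power_image (cube a b) (\<lambda>f. Tadj (cube a b) k (Top (cube a b) k f)) \<beta>
              (Tadj (cube a b) k \<psi>) \<phi>) \<and>
     norm_2inf (cube a b) (cube a b) k \<le> ennreal C \<and>
     ennreal (1 / C) \<le> opnorm_L2 (cube a b) (cube a b) k}"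

definition reg_inv :: "'p::euclidean_space set \<Rightarrow> 'q::euclidean_space set \<Rightarrow> ('q \<Rightarrow> 'p \<Rightarrow> real)
    \<Rightarrow> real \<Rightarrow> ('p \<Rightarrow> real) \<Rightarrow> 'p \<Rightarrow> real" where
  "reg_inv Sp Sq k \<alpha> h = (THE g. continuous_on Sp g \<and> (\<forall>z. z \<notin> Sp \<longrightarrow> g z = 0) \<and>
       (\<forall>z\<in>Sp. \<alpha> * g z + Tadj Sq k (Top Sp k g) z = h z))"

definition reg_proj :: "'p::euclidean_space set \<Rightarrow> 'q::euclidean_space set \<Rightarrow> ('q \<Rightarrow> 'p \<Rightarrow> real)
    \<Rightarrow> real \<Rightarrow> ('p \<Rightarrow> real) \<Rightarrow> 'p \<Rightarrow> real" where
  "reg_proj Sp Sq k \<alpha> \<phi> = reg_inv Sp Sq k \<alpha> (Tadj Sq k (Top Sp k \<phi>))"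

end

theory Submission
  imports Defs
begin

lemma fin_lebesgue_on:
  fixes S :: "'a::euclidean_space set"
  assumes "compact S" shows "finite_measure (lebesgue_on S)"
proof -
  have "S \<in> lmeasurable" using assms by (simp add: lmeasurable_compact)
  then have "S \<in> sets lebesgue" "emeasure lebesgue S < \<infinity>" by (auto simp: fmeasurable_def)
  then show ?thesis
    by (intro finite_measureI) (simp add: emeasure_restrict_space del: emeasure_completion)
qed

lemma space_lebesgue_on_eq: "space (lebesgue_on S) = S"
  by simp

lemma sqint_integrable:
  fixes S :: "'a::euclidean_space set"
  assumes "compact S" "sqint S f" shows "integrable (lebesgue_on S) f"
proof -
  interpret finite_measure "lebesgue_on S" using fin_lebesgue_on[OF assms(1)] .
  have "f \<in> borel_measurable (lebesgue_on S)" "integrable (lebesgue_on S) (\<lambda>x. (f x)^2)"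
    using assms(2) unfolding sqint_def by auto
  then show ?thesis by (rule square_integrable_imp_integrable)
qed

lemma sqint_mult_integrable:
  fixes S :: "'a::euclidean_space set"
  assumes "sqint S f" "sqint S g" shows "integrable (lebesgue_on S) (\<lambda>x. f x * g x)"
proof -
  have i: "integrable (lebesgue_on S) (\<lambda>x. (f x)\<^sup>2 + (g x)\<^sup>2)"
    using assms unfolding sqint_def by auto
  have m: "(\<lambda>x. f x * g x) \<in> borel_measurable (lebesgue_on S)"
    using assms unfolding sqint_def by auto
  have a: "AE x in lebesgue_on S. norm (f x * g x) \<le> norm ((f x)\<^sup>2 + (g x)\<^sup>2)"
  proof (rule AE_I2)
    fix x
    have "2 * \<bar>f x\<bar> * \<bar>g x\<bar> \<le> (f x)\<^sup>2 + (g x)\<^sup>2"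
      using sum_squares_bound[of "\<bar>f x\<bar>" "\<bar>g x\<bar>"] by simp
    moreover have "0 \<le> \<bar>f x\<bar> * \<bar>g x\<bar>" by simp
    ultimately have "\<bar>f x\<bar> * \<bar>g x\<bar> \<le> (f x)\<^sup>2 + (g x)\<^sup>2" by linarith
    then show "norm (f x * g x) \<le> norm ((f x)\<^sup>2 + (g x)\<^sup>2)"
      by (simp add: abs_mult)
  qed
  show ?thesis by (rule Bochner_Integration.integrable_bound[OF i m a])
qed

lemma sqint_add: "sqint S f \<Longrightarrow> sqint S g \<Longrightarrow> sqint S (\<lambda>x. f x + g x)"
  unfolding sqint_def
  using sqint_mult_integrable[of S f g] unfolding sqint_def power2_sum
  by (auto simp: mult.assoc intro!: Bochner_Integration.integrable_add)

lemma sqint_cmult: "sqint S f \<Longrightarrow> sqint S (\<lambda>x. c * f x)"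
  unfolding sqint_def by (auto simp: power_mult_distrib)

lemma sqint_uminus: "sqint S f \<Longrightarrow> sqint S (\<lambda>x. - f x)"
  using sqint_cmult[of S f "-1"] by simp

lemma sqint_diff: "sqint S f \<Longrightarrow> sqint S g \<Longrightarrow> sqint S (\<lambda>x. f x - g x)"
  using sqint_add[of S f "\<lambda>x. - g x"] sqint_uminus[of S g] by simp

lemma sqint_zero: "sqint S (\<lambda>x. 0)"
  unfolding sqint_def by auto

lemma sqint_sum: "finite J \<Longrightarrow> (\<And>j. j \<in> J \<Longrightarrow> sqint S (f j)) \<Longrightarrow> sqint S (\<lambda>x. \<Sum>j\<in>J. f j x)"
  by (induction J rule: finite_induct) (auto intro: sqint_add sqint_zero)

lemma sqint_cong: "sqint S f \<Longrightarrow> (\<And>x. x \<in> S \<Longrightarrow> f x = g x) \<Longrightarrow> sqint S g"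
proof -
  assume a: "sqint S f" and e: "\<And>x. x \<in> S \<Longrightarrow> f x = g x"
  have e': "\<And>x. x \<in> space (lebesgue_on S) \<Longrightarrow> f x = g x" using e by simp
  show ?thesis using a unfolding sqint_def
    using measurable_cong[of "lebesgue_on S" f g, OF e'] Bochner_Integration.integrable_cong[of "lebesgue_on S" "lebesgue_on S" "\<lambda>x. (f x)^2" "\<lambda>x. (g x)^2"] e'
    by auto
qed

lemma compact_sets_lebesgue: "compact (S::'a::euclidean_space set) \<Longrightarrow> S \<in> sets lebesgue"
  using lmeasurable_compact[of S] by (auto simp: fmeasurable_def)

lemma continuous_measurable_on:
  fixes S :: "'a::euclidean_space set"
  assumes "compact S" "continuous_on S f" shows "f \<in> borel_measurable (lebesgue_on S)"
  using assms compact_sets_lebesgue[of S] by (intro continuous_imp_measurable_on_sets_lebesgue) auto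

lemma continuous_bounded_on:
  fixes S :: "'a::euclidean_space set" and f :: "'a \<Rightarrow> real"
  assumes "compact S" "continuous_on S f" shows "\<exists>B. \<forall>x\<in>S. \<bar>f x\<bar> \<le> B"
proof -
  have "bounded (f ` S)" using assms compact_continuous_image compact_imp_bounded by blast
  then show ?thesis unfolding bounded_iff by auto
qed

lemma continuous_integrable:
  fixes S :: "'a::euclidean_space set" and f :: "'a \<Rightarrow> real"
  assumes "compact S" "continuous_on S f" shows "integrable (lebesgue_on S) f"
proof -
  interpret finite_measure "lebesgue_on S" using fin_lebesgue_on[OF assms(1)] .
  obtain B where B: "\<forall>x\<in>S. \<bar>f x\<bar> \<le> B" using continuous_bounded_on[OF assms] by blast
  show ?thesis
    by (rule integrable_const_bound[where B=B]) (use B continuous_measurable_on[OF assms] in auto)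
qed

lemma continuous_sqint:
  fixes S :: "'a::euclidean_space set"
  assumes "compact S" "continuous_on S f" shows "sqint S f"
proof -
  have m: "f \<in> borel_measurable (lebesgue_on S)"
    using continuous_measurable_on[OF assms] .
  have "continuous_on S (\<lambda>x. (f x)^2)" using assms(2) by (intro continuous_intros)
  then have "integrable (lebesgue_on S) (\<lambda>x. (f x)^2)"
    using assms(1) by (intro continuous_integrable) auto
  with m show ?thesis unfolding sqint_def by auto
qed

lemma ip_comm: "ip S f g = ip S g f"
  unfolding ip_def by (simp add: mult.commute)

lemma L2norm_nonneg: "0 \<le> L2norm S f"
  unfolding L2norm_def by simp

lemma ip_self_nonneg: "0 \<le> ip S f f"
  unfolding ip_def by (simp add: integral_nonneg)

lemma L2norm_sq: "(L2norm S f)^2 = ip S f f"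
  unfolding L2norm_def ip_def
  by (simp add: power2_eq_square integral_nonneg)

lemma L2norm_eq_sqrt: "L2norm S f = sqrt (ip S f f)"
  unfolding L2norm_def ip_def by (simp add: power2_eq_square)

lemma ip_add_left: "sqint S f \<Longrightarrow> sqint S g \<Longrightarrow> sqint S h \<Longrightarrow>
   ip S (\<lambda>x. f x + g x) h = ip S f h + ip S g h"
  unfolding ip_def using sqint_mult_integrable[of S f h] sqint_mult_integrable[of S g h]
  by (simp add: distrib_right)

lemma ip_diff_left: "sqint S f \<Longrightarrow> sqint S g \<Longrightarrow> sqint S h \<Longrightarrow>
   ip S (\<lambda>x. f x - g x) h = ip S f h - ip S g h"
  unfolding ip_def using sqint_mult_integrable[of S f h] sqint_mult_integrable[of S g h]
  by (simp add: left_diff_distrib)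

lemma ip_cmult_left: "ip S (\<lambda>x. c * f x) h = c * ip S f h"
  unfolding ip_def by (simp add: mult.assoc)

lemma ip_add_right: "sqint S f \<Longrightarrow> sqint S g \<Longrightarrow> sqint S h \<Longrightarrow>
   ip S h (\<lambda>x. f x + g x) = ip S h f + ip S h g"
  using ip_add_left[of S f g h] by (simp add: ip_comm)

lemma ip_diff_right: "sqint S f \<Longrightarrow> sqint S g \<Longrightarrow> sqint S h \<Longrightarrow>
   ip S h (\<lambda>x. f x - g x) = ip S h f - ip S h g"
  using ip_diff_left[of S f g h] by (simp add: ip_comm)

lemma ip_cmult_right: "ip S h (\<lambda>x. c * f x) = c * ip S h f"
  using ip_cmult_left[of S c f h] by (simp add: ip_comm)

lemma ip_sum_left: "finite J \<Longrightarrow> (\<And>j. j \<in> J \<Longrightarrow> sqint S (f j)) \<Longrightarrow> sqint S h \<Longrightarrow>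
   ip S (\<lambda>x. \<Sum>j\<in>J. f j x) h = (\<Sum>j\<in>J. ip S (f j) h)"
  unfolding ip_def using sqint_mult_integrable[of S _ h]
  by (simp add: sum_distrib_right)

lemma ip_sum_right: "finite J \<Longrightarrow> (\<And>j. j \<in> J \<Longrightarrow> sqint S (f j)) \<Longrightarrow> sqint S h \<Longrightarrow>
   ip S h (\<lambda>x. \<Sum>j\<in>J. f j x) = (\<Sum>j\<in>J. ip S h (f j))"
  using ip_sum_left[of J S f h] by (simp add: ip_comm)

lemma ip_cong: "(\<And>x. x \<in> S \<Longrightarrow> f x = f' x) \<Longrightarrow> (\<And>x. x \<in> S \<Longrightarrow> g x = g' x) \<Longrightarrow>
   ip S f g = ip S f' g'"
  unfolding ip_def by (intro Bochner_Integration.integral_cong) auto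

lemma L2norm_cong: "(\<And>x. x \<in> S \<Longrightarrow> f x = f' x) \<Longrightarrow> L2norm S f = L2norm S f'"
  unfolding L2norm_eq_sqrt using ip_cong[of S f f' f f'] by simp

lemma disc_lemma:
  fixes A B X :: real
  assumes A: "0 \<le> A" and B: "0 \<le> B" and q: "\<And>t. 0 \<le> A - 2 * t * X + t^2 * B"
  shows "X^2 \<le> A * B"
proof (cases "B = 0")
  case True
  have "X = 0"
  proof (rule ccontr)
    assume "X \<noteq> 0"
    have "0 \<le> A - 2 * ((A + 1) / (2 * X)) * X + ((A + 1) / (2 * X))^2 * B" by (rule q)
    also have "\<dots> = A - (A + 1)" using True \<open>X \<noteq> 0\<close> by (simp add: field_simps)
    finally show False by simp
  qed
  then show ?thesis using A B by simp
next
  case False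
  then have Bp: "B > 0" using B by simp
  have "0 \<le> A - 2 * (X / B) * X + (X / B)^2 * B" by (rule q)
  also have "\<dots> = A - X^2 / B" using Bp by (simp add: field_simps power2_eq_square)
  finally have "X^2 / B \<le> A" by simp
  then show ?thesis using Bp by (simp add: field_simps)
qed

lemma cauchy_schwarz_ip:
  assumes f: "sqint S f" and g: "sqint S g"
  shows "\<bar>ip S f g\<bar> \<le> L2norm S f * L2norm S g"
proof -
  have q: "0 \<le> ip S f f - 2 * t * ip S f g + t^2 * ip S g g" for t
  proof -
    have "0 \<le> ip S (\<lambda>x. f x - t * g x) (\<lambda>x. f x - t * g x)" by (rule ip_self_nonneg)
    also have "\<dots> = ip S f f - 2 * t * ip S f g + t^2 * ip S g g"
      using f g sqint_cmult[OF g, of t]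
      by (simp add: ip_diff_left ip_diff_right sqint_diff ip_cmult_left ip_cmult_right ip_comm[of S g f]
          power2_eq_square algebra_simps)
    finally show ?thesis .
  qed
  have "(ip S f g)^2 \<le> ip S f f * ip S g g"
    by (rule disc_lemma[OF ip_self_nonneg ip_self_nonneg q])
  then have "sqrt ((ip S f g)^2) \<le> sqrt (ip S f f * ip S g g)" by (rule real_sqrt_le_mono)
  then show ?thesis by (simp add: L2norm_eq_sqrt real_sqrt_mult)
qed

lemma L2norm_zero_AE:
  assumes "sqint S f" "L2norm S f = 0"
  shows "AE x in lebesgue_on S. f x = 0"
proof -
  have "integral\<^sup>L (lebesgue_on S) (\<lambda>x. (f x)^2) = 0"
    using assms(2) unfolding L2norm_def by (simp add: integral_nonneg)
  then have "AE x in lebesgue_on S. (f x)^2 = 0"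
    using assms(1) unfolding sqint_def by (subst (asm) integral_nonneg_eq_0_iff_AE) auto
  then show ?thesis by auto
qed

lemma L2norm_zero_continuous:
  fixes S :: "'a::euclidean_space set" and f :: "'a \<Rightarrow> real"
  assumes S: "compact S" "S \<subseteq> closure (interior S)" and f: "continuous_on S f"
    and z: "L2norm S f = 0" and x: "x \<in> S"
  shows "f x = 0"
proof (rule ccontr)
  assume nz: "f x \<noteq> 0"
  define c where "c = \<bar>f x\<bar> / 2"
  have c: "c > 0" using nz by (simp add: c_def)
  obtain e where e: "e > 0" "\<And>y. y \<in> S \<Longrightarrow> dist y x < e \<Longrightarrow> dist (f y) (f x) < c"
    using f x c unfolding continuous_on_iff by blast
  have "x \<in> closure (interior S)" using S x by auto
  then obtain y where y: "y \<in> interior S" "dist y x < e / 2"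
    using e(1) unfolding closure_approachable by (metis half_gt_zero dist_commute)
  obtain r where r: "r > 0" "ball y r \<subseteq> S" using y(1) by (meson interior_subset mem_interior open_contains_ball_eq open_interior subset_trans)
  define r' where "r' = min r (e/2)"
  have r': "r' > 0" "ball y r' \<subseteq> S" using r e by (auto simp: r'_def)
  have fy: "\<bar>f z\<bar> > c" if "z \<in> ball y r'" for z
  proof -
    have "dist z x < e" using that y(2) dist_triangle[of z x y]
      by (auto simp: r'_def dist_commute)
    then have "dist (f z) (f x) < c" using e(2) r'(2) that by auto
    then show ?thesis unfolding c_def dist_real_def by linarith
  qed
  have sq: "sqint S f" using continuous_sqint[OF S(1) f] .
  have Ss: "S \<in> sets lebesgue" using compact_sets_lebesgue[OF S(1)] .
  have bm: "ball y r' \<in> sets (lebesgue_on S)"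
    using r' Ss by (simp add: sets_restrict_space_iff)
  have "c^2 * measure (lebesgue_on S) (ball y r') = integral\<^sup>L (lebesgue_on S) (\<lambda>z. c^2 * indicator (ball y r') z)"
    using r' by (simp add: Int_absorb2)
  also have "\<dots> \<le> integral\<^sup>L (lebesgue_on S) (\<lambda>z. (f z)^2)"
  proof (rule integral_mono)
    interpret finite_measure "lebesgue_on S" using fin_lebesgue_on[OF S(1)] .
    show "integrable (lebesgue_on S) (\<lambda>z. c^2 * indicator (ball y r') z)"
      using bm by (intro integrable_mult_right integrable_const_bound[where B=1]) auto
    show "integrable (lebesgue_on S) (\<lambda>z. (f z)^2)" using sq unfolding sqint_def by auto
    fix z assume "z \<in> space (lebesgue_on S)"
    show "c^2 * indicator (ball y r') z \<le> (f z)^2"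
    proof (cases "z \<in> ball y r'")
      case True
      then have "c^2 < (f z)^2" using power_strict_mono[of c "\<bar>f z\<bar>" 2] fy[OF True] c by simp
      then show ?thesis using True by simp
    qed simp
  qed
  also have "\<dots> = 0" using z unfolding L2norm_def by (simp add: integral_nonneg)
  finally have "measure (lebesgue_on S) (ball y r') \<le> 0" using c
    by (simp add: mult_le_0_iff)
  moreover have "measure (lebesgue_on S) (ball y r') = measure lebesgue (ball y r')"
    using r' Ss by (intro measure_restrict_space) auto
  moreover have "measure lebesgue (ball y r') > 0"
    using content_ball_pos[OF r'(1), of y] by (simp add: measure_completion)
  ultimately show False using content_ball_pos[OF r'(1), of y] by (simp add: measure_completion)
qed

definition clampv :: "real \<Rightarrow> real \<Rightarrow> real^'n \<Rightarrow> real^'n" where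
  "clampv a b x = (\<chi> i. max a (min b (x$i)))"

lemma cube_cbox: "cube a b = cbox ((\<chi> i. a)::real^'n) (\<chi> i. b)"
  by (auto simp: cube_def mem_box_cart)

lemma compact_cube: "compact (cube a b :: (real^'n) set)"
  by (simp add: cube_cbox)

lemma cube_closure_interior:
  assumes "a < b" shows "cube a b \<subseteq> closure (interior (cube a b :: (real^'n) set))"
proof -
  have "((\<chi> i. (a+b)/2)::real^'n) \<in> box (\<chi> i. a) (\<chi> i. b)"
    using assms by (auto simp: mem_box_cart)
  then have "box ((\<chi> i. a)::real^'n) (\<chi> i. b) \<noteq> {}" by auto
  then show ?thesis by (simp add: cube_cbox)
qed

lemma clampv_in: "a \<le> b \<Longrightarrow> clampv a b x \<in> cube a b"
  by (auto simp: clampv_def cube_def)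

lemma clampv_id: "x \<in> cube a b \<Longrightarrow> clampv a b x = x"
  by (auto simp: clampv_def cube_def vec_eq_iff)

lemma continuous_clampv: "continuous_on UNIV (clampv a b :: real^'n \<Rightarrow> real^'n)"
  unfolding clampv_def by (intro continuous_intros)

lemma lebesgue_on_to_borel: "(\<lambda>x. x) \<in> measurable (lebesgue_on S) borel"
  by (intro measurable_restrict_space1 measurable_completion) simp

lemma kernel_measurable:
  fixes k :: "real^'q \<Rightarrow> real^'p \<Rightarrow> real"
  assumes ab: "a \<le> b" and k: "cont_kernel (cube a b) (cube a b) k"
  shows "(\<lambda>(w,z). k w z) \<in> borel_measurable (lebesgue_on (cube a b) \<Otimes>\<^sub>M lebesgue_on (cube a b))"
proof -
  define kx where "kx = (\<lambda>(p::(real^'q) \<times> (real^'p)). k (clampv a b (fst p)) (clampv a b (snd p)))"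
  have "continuous_on UNIV kx"
  proof -
    have c1: "continuous_on UNIV (\<lambda>p::(real^'q) \<times> (real^'p). (clampv a b (fst p), clampv a b (snd p)))"
      by (intro continuous_intros continuous_on_compose2[OF continuous_clampv]) auto
    have "continuous_on UNIV ((\<lambda>(w,z). k w z) \<circ> (\<lambda>p::(real^'q) \<times> (real^'p). (clampv a b (fst p), clampv a b (snd p))))"
      proof (rule continuous_on_compose[OF c1])
      have "range (\<lambda>p::(real^'q) \<times> (real^'p). (clampv a b (fst p), clampv a b (snd p))) \<subseteq> cube a b \<times> cube a b"
      proof -
        have "\<And>x::real^'q. clampv a b x \<in> cube a b" "\<And>x::real^'p. clampv a b x \<in> cube a b"
          using ab by (auto intro: clampv_in)
        then show ?thesis by auto
      qed
      then show "continuous_on (range (\<lambda>p::(real^'q) \<times> (real^'p). (clampv a b (fst p), clampv a b (snd p)))) (\<lambda>(w,z). k w z)"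
        using k unfolding cont_kernel_def by (rule continuous_on_subset[rotated])
    qed
    then show ?thesis by (simp add: kx_def o_def)
  qed
  then have "kx \<in> borel_measurable borel" by (rule borel_measurable_continuous_onI)
  then have m1: "kx \<in> borel_measurable (borel \<Otimes>\<^sub>M borel)" by (simp add: borel_prod)
  have m2: "(\<lambda>p. (fst p, snd p)) \<in> measurable (lebesgue_on (cube a b) \<Otimes>\<^sub>M lebesgue_on (cube a b)) (borel \<Otimes>\<^sub>M borel)"
    by (intro measurable_Pair measurable_compose[OF measurable_fst lebesgue_on_to_borel]
        measurable_compose[OF measurable_snd lebesgue_on_to_borel])
  have "kx \<in> borel_measurable (lebesgue_on (cube a b) \<Otimes>\<^sub>M lebesgue_on (cube a b))"
    using measurable_compose[OF m2 m1] by simp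
  moreover have "\<And>p. p \<in> space (lebesgue_on (cube a b) \<Otimes>\<^sub>M lebesgue_on (cube a b)) \<Longrightarrow> kx p = (\<lambda>(w,z). k w z) p"
    by (auto simp: kx_def space_pair_measure clampv_id)
  ultimately show ?thesis using measurable_cong by blast
qed

lemma integrable_bdd_mult:
  fixes v g :: "'a \<Rightarrow> real"
  assumes v: "integrable M v" and g: "g \<in> borel_measurable M" and B: "\<And>x. x \<in> space M \<Longrightarrow> \<bar>g x\<bar> \<le> B"
  shows "integrable M (\<lambda>x. g x * v x)"
proof -
  have i: "integrable M (\<lambda>x. B * v x)" using v by simp
  have m: "(\<lambda>x. g x * v x) \<in> borel_measurable M" using v g by (simp add: borel_measurable_integrable)
  have "AE x in M. norm (g x * v x) \<le> norm (B * v x)"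
  proof (rule AE_I2)
    fix x assume x: "x \<in> space M"
    have "\<bar>g x\<bar> * \<bar>v x\<bar> \<le> \<bar>B\<bar> * \<bar>v x\<bar>"
      using B[OF x] by (intro mult_right_mono) auto
    then show "norm (g x * v x) \<le> norm (B * v x)" by (simp add: abs_mult)
  qed
  then show ?thesis by (rule Bochner_Integration.integrable_bound[OF i m])
qed

lemma kernel_bound:
  fixes k :: "'q::euclidean_space \<Rightarrow> 'p::euclidean_space \<Rightarrow> real"
  assumes "compact Q" "compact P" "cont_kernel Q P k"
  shows "\<exists>M. 0 \<le> M \<and> (\<forall>w\<in>Q. \<forall>z\<in>P. \<bar>k w z\<bar> \<le> M)"
proof -
  obtain B where B: "\<forall>x\<in>Q \<times> P. \<bar>(\<lambda>(w,z). k w z) x\<bar> \<le> B"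
    using continuous_bounded_on[of "Q \<times> P" "\<lambda>(w,z). k w z"] assms
    by (auto simp: cont_kernel_def compact_Times)
  show ?thesis by (rule exI[of _ "max B 0"]) (use B in force)
qed

lemma kernel_slice_cont:
  fixes k :: "'q::euclidean_space \<Rightarrow> 'p::euclidean_space \<Rightarrow> real"
  assumes "cont_kernel Q P k" "z \<in> P"
  shows "continuous_on Q (\<lambda>w. k w z)"
proof -
  have "continuous_on Q ((\<lambda>(w,z). k w z) \<circ> (\<lambda>w. (w, z)))"
    by (rule continuous_on_compose) (use assms in \<open>auto simp: cont_kernel_def intro!: continuous_intros intro: continuous_on_subset\<close>)
  then show ?thesis by (simp add: o_def)
qed

lemma integrable_kv:
  fixes k :: "'q::euclidean_space \<Rightarrow> 'p::euclidean_space \<Rightarrow> real"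
  assumes "compact Q" "compact P" "cont_kernel Q P k" "z \<in> P" "integrable (lebesgue_on Q) v"
  shows "integrable (lebesgue_on Q) (\<lambda>w. k w z * v w)"
proof -
  obtain M where M: "\<forall>w\<in>Q. \<forall>z\<in>P. \<bar>k w z\<bar> \<le> M" using kernel_bound[OF assms(1-3)] by blast
  have c: "continuous_on Q (\<lambda>w. k w z)" using kernel_slice_cont[OF assms(3,4)] .
  show ?thesis
    by (rule integrable_bdd_mult[where B=M]) (use assms M continuous_measurable_on[OF assms(1) c] in auto)
qed

lemma Tadj_bound:
  fixes k :: "'q::euclidean_space \<Rightarrow> 'p::euclidean_space \<Rightarrow> real"
  assumes "compact Q" "compact P" "cont_kernel Q P k" "z \<in> P" "integrable (lebesgue_on Q) v"
    and M: "\<forall>w\<in>Q. \<forall>z\<in>P. \<bar>k w z\<bar> \<le> M"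
  shows "\<bar>Tadj Q k v z\<bar> \<le> M * (\<integral>w. \<bar>v w\<bar> \<partial>lebesgue_on Q)"
proof -
  have "\<bar>Tadj Q k v z\<bar> \<le> (\<integral>w. M * \<bar>v w\<bar> \<partial>lebesgue_on Q)"
    unfolding Tadj_def
  proof (rule integral_abs_bound_integral)
    show "integrable (lebesgue_on Q) (\<lambda>w. k w z * v w)" by (rule integrable_kv[OF assms(1-5)])
    show "integrable (lebesgue_on Q) (\<lambda>w. M * \<bar>v w\<bar>)" using assms(5) by auto
    fix w assume "w \<in> space (lebesgue_on Q)"
    then show "\<bar>k w z * v w\<bar> \<le> M * \<bar>v w\<bar>" using M assms(4)
      by (auto simp: abs_mult intro: mult_right_mono)
  qed
  then show ?thesis by simp
qed

lemma Tadj_cont: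
  fixes k :: "'q::euclidean_space \<Rightarrow> 'p::euclidean_space \<Rightarrow> real"
  assumes Q: "compact Q" and P: "compact P" and k: "cont_kernel Q P k" and v: "integrable (lebesgue_on Q) v"
  shows "continuous_on P (Tadj Q k v)"
  unfolding continuous_on_iff
proof (intro ballI allI impI)
  fix z :: 'p and e :: real
  assume z: "z \<in> P" and e: "0 < e"
  define N where "N = (\<integral>w. \<bar>v w\<bar> \<partial>lebesgue_on Q) + 1"
  have "0 \<le> (\<integral>w. \<bar>v w\<bar> \<partial>lebesgue_on Q)" by (rule Bochner_Integration.integral_nonneg) simp
  then have N: "N > 0" unfolding N_def by linarith
  have uc: "uniformly_continuous_on (Q \<times> P) (\<lambda>(w,z). k w z)"
    using k Q P by (intro compact_uniformly_continuous) (auto simp: cont_kernel_def compact_Times)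
  obtain d where d: "d > 0" "\<And>x x'. x \<in> Q \<times> P \<Longrightarrow> x' \<in> Q \<times> P \<Longrightarrow> dist x' x < d \<Longrightarrow>
      dist ((\<lambda>(w,z). k w z) x') ((\<lambda>(w,z). k w z) x) < e / N"
    using uc N e unfolding uniformly_continuous_on_def by (metis divide_pos_pos)
  show "\<exists>d>0. \<forall>z'\<in>P. dist z' z < d \<longrightarrow> dist (Tadj Q k v z') (Tadj Q k v z) < e"
  proof (intro exI[of _ d] conjI ballI impI)
    show "d > 0" by (rule d)
    fix z' assume z': "z' \<in> P" "dist z' z < d"
    have kk: "\<bar>k w z' - k w z\<bar> \<le> e / N" if w: "w \<in> Q" for w
    proof -
      have "dist (w, z') (w, z) < d" using z' by (simp add: dist_Pair_Pair)
      then have "dist (k w z') (k w z) < e / N" using d(2)[of "(w,z)" "(w,z')"] w z z'(1) by auto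
      then show ?thesis by (simp add: dist_real_def)
    qed
    have i1: "integrable (lebesgue_on Q) (\<lambda>w. k w z' * v w)" by (rule integrable_kv[OF Q P k z'(1) v])
    have i2: "integrable (lebesgue_on Q) (\<lambda>w. k w z * v w)" by (rule integrable_kv[OF Q P k z v])
    have "\<bar>Tadj Q k v z' - Tadj Q k v z\<bar> = \<bar>\<integral>w. (k w z' - k w z) * v w \<partial>lebesgue_on Q\<bar>"
      unfolding Tadj_def using i1 i2 by (simp add: left_diff_distrib)
    also have "\<dots> \<le> (\<integral>w. e / N * \<bar>v w\<bar> \<partial>lebesgue_on Q)"
    proof (rule integral_abs_bound_integral)
      show "integrable (lebesgue_on Q) (\<lambda>w. (k w z' - k w z) * v w)"
        using i1 i2 by (simp add: left_diff_distrib)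
      show "integrable (lebesgue_on Q) (\<lambda>w. e / N * \<bar>v w\<bar>)" using v by auto
      fix w assume "w \<in> space (lebesgue_on Q)"
      then have "\<bar>k w z' - k w z\<bar> * \<bar>v w\<bar> \<le> e / N * \<bar>v w\<bar>"
        using kk by (intro mult_right_mono) auto
      then show "\<bar>(k w z' - k w z) * v w\<bar> \<le> e / N * \<bar>v w\<bar>"
        by (simp add: abs_mult)
    qed
    also have "\<dots> = e / N * (N - 1)" by (simp add: N_def)
    also have "\<dots> < e" using N e by (simp add: field_simps)
    finally show "dist (Tadj Q k v z') (Tadj Q k v z) < e" by (simp add: dist_real_def)
  qed
qed

definition swapk :: "('q \<Rightarrow> 'p \<Rightarrow> real) \<Rightarrow> 'p \<Rightarrow> 'q \<Rightarrow> real" where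
  "swapk k = (\<lambda>z w. k w z)"

lemma Top_as_Tadj: "Top P k u = Tadj P (swapk k) u"
  by (simp add: Top_def Tadj_def swapk_def fun_eq_iff)

lemma cont_kernel_swap: "cont_kernel Q P k \<Longrightarrow> cont_kernel P Q (swapk k)"
proof -
  assume k: "cont_kernel Q P k"
  have "continuous_on (P \<times> Q) ((\<lambda>(w,z). k w z) \<circ> (\<lambda>p. (snd p, fst p)))"
    by (rule continuous_on_compose) (use k in \<open>auto simp: cont_kernel_def intro!: continuous_intros intro: continuous_on_subset\<close>)
  then show ?thesis by (simp add: cont_kernel_def swapk_def o_def case_prod_beta)
qed

lemma l1_le_L2:
  fixes S :: "'a::euclidean_space set"
  assumes S: "compact S" and f: "sqint S f"
  shows "(\<integral>x. \<bar>f x\<bar> \<partial>lebesgue_on S) \<le> sqrt (measure lebesgue S) * L2norm S f"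
proof -
  have fa: "sqint S (\<lambda>x. \<bar>f x\<bar>)" using f unfolding sqint_def by auto
  have one: "sqint S (\<lambda>x. 1)" by (rule continuous_sqint[OF S]) simp
  have "(\<integral>x. \<bar>f x\<bar> \<partial>lebesgue_on S) = ip S (\<lambda>x. \<bar>f x\<bar>) (\<lambda>x. 1)" by (simp add: ip_def)
  also have "\<dots> \<le> \<bar>ip S (\<lambda>x. \<bar>f x\<bar>) (\<lambda>x. 1)\<bar>" by simp
  also have "\<dots> \<le> L2norm S (\<lambda>x. \<bar>f x\<bar>) * L2norm S (\<lambda>x. 1)" by (rule cauchy_schwarz_ip[OF fa one])
  also have "L2norm S (\<lambda>x. \<bar>f x\<bar>) = L2norm S f" by (simp add: L2norm_def)
  also have "L2norm S (\<lambda>x. 1) = sqrt (measure lebesgue S)"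
    using compact_sets_lebesgue[OF S] by (simp add: L2norm_def measure_restrict_space)
  finally show ?thesis by (simp add: mult.commute)
qed

lemma prod_integrable:
  fixes f :: "'a \<Rightarrow> real" and g :: "'b \<Rightarrow> real"
  assumes M1: "sigma_finite_measure M1" and M2: "sigma_finite_measure M2"
    and f: "integrable M1 f" and g: "integrable M2 g"
  shows "integrable (M1 \<Otimes>\<^sub>M M2) (\<lambda>p. f (fst p) * g (snd p))"
proof -
  interpret M2: sigma_finite_measure M2 by (rule M2)
  have fm[measurable]: "f \<in> borel_measurable M1" using f by (rule borel_measurable_integrable)
  have gm[measurable]: "g \<in> borel_measurable M2" using g by (rule borel_measurable_integrable)
  have m: "(\<lambda>p. f (fst p) * g (snd p)) \<in> borel_measurable (M1 \<Otimes>\<^sub>M M2)" by measurable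
  have "(\<integral>\<^sup>+p. ennreal (norm (f (fst p) * g (snd p))) \<partial>(M1 \<Otimes>\<^sub>M M2))
      = (\<integral>\<^sup>+x. \<integral>\<^sup>+y. ennreal (norm (f (fst (x,y)) * g (snd (x,y)))) \<partial>M2 \<partial>M1)"
    by (rule M2.nn_integral_fst[symmetric]) measurable
  also have "\<dots> = (\<integral>\<^sup>+x. ennreal (norm (f x)) * (\<integral>\<^sup>+y. ennreal (norm (g y)) \<partial>M2) \<partial>M1)"
    by (simp add: abs_mult ennreal_mult nn_integral_cmult)
  also have "\<dots> = (\<integral>\<^sup>+x. ennreal (norm (f x)) \<partial>M1) * (\<integral>\<^sup>+y. ennreal (norm (g y)) \<partial>M2)"
    by (simp add: nn_integral_multc)
  also have "\<dots> < \<infinity>"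
    using f g unfolding integrable_iff_bounded by (simp add: ennreal_mult_less_top)
  finally show ?thesis using m unfolding integrable_iff_bounded by simp
qed

lemma sigma_finite_lebesgue_on:
  fixes S :: "'a::euclidean_space set"
  assumes "compact S" shows "sigma_finite_measure (lebesgue_on S)"
proof -
  interpret finite_measure "lebesgue_on S" using fin_lebesgue_on[OF assms] .
  show ?thesis by unfold_locales
qed

lemma adjoint:
  fixes k :: "real^'q \<Rightarrow> real^'p \<Rightarrow> real" and u :: "real^'p \<Rightarrow> real" and v :: "real^'q \<Rightarrow> real"
  assumes ab: "a \<le> b" and k: "cont_kernel (cube a b) (cube a b) k"
    and u: "sqint (cube a b) u" and v: "sqint (cube a b) v"
  shows "ip (cube a b) (Tadj (cube a b) k v) u = ip (cube a b) v (Top (cube a b) k u)"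
proof -
  let ?Q = "cube a b :: (real^'q) set" and ?P = "cube a b :: (real^'p) set"
  let ?M1 = "lebesgue_on ?Q" and ?M2 = "lebesgue_on ?P"
  have Qc: "compact ?Q" and Pc: "compact ?P" by (rule compact_cube)+
  interpret pair_sigma_finite ?M1 ?M2
    unfolding pair_sigma_finite_def using sigma_finite_lebesgue_on[OF Qc] sigma_finite_lebesgue_on[OF Pc] by auto
  have ui: "integrable ?M2 u" by (rule sqint_integrable[OF Pc u])
  have vi: "integrable ?M1 v" by (rule sqint_integrable[OF Qc v])
  obtain M where M: "\<forall>w\<in>?Q. \<forall>z\<in>?P. \<bar>k w z\<bar> \<le> M" using kernel_bound[OF Qc Pc k] by blast
  have km: "(\<lambda>(w,z). k w z) \<in> borel_measurable (?M1 \<Otimes>\<^sub>M ?M2)" by (rule kernel_measurable[OF ab k])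
  have int: "integrable (?M1 \<Otimes>\<^sub>M ?M2) (case_prod (\<lambda>w z. k w z * v w * u z))"
  proof -
    have pi: "integrable (?M1 \<Otimes>\<^sub>M ?M2) (\<lambda>p. v (fst p) * u (snd p))"
      by (rule prod_integrable[OF sigma_finite_lebesgue_on[OF Qc] sigma_finite_lebesgue_on[OF Pc] vi ui])
    have "integrable (?M1 \<Otimes>\<^sub>M ?M2) (\<lambda>p. (\<lambda>(w,z). k w z) p * (v (fst p) * u (snd p)))"
    proof (rule integrable_bdd_mult[OF pi km, where B=M])
      fix p assume "p \<in> space (?M1 \<Otimes>\<^sub>M ?M2)"
      then show "\<bar>(\<lambda>(w,z). k w z) p\<bar> \<le> M" using M by (auto simp: space_pair_measure)
    qed
    moreover have "(\<lambda>p. (\<lambda>(w,z). k w z) p * (v (fst p) * u (snd p))) = case_prod (\<lambda>w z. k w z * v w * u z)"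
      by (auto simp: fun_eq_iff mult.assoc)
    ultimately show ?thesis by simp
  qed
  have "ip ?P (Tadj ?Q k v) u = (\<integral>z. (\<integral>w. k w z * v w * u z \<partial>?M1) \<partial>?M2)"
    unfolding ip_def Tadj_def by simp
  also have "\<dots> = (\<integral>w. (\<integral>z. k w z * v w * u z \<partial>?M2) \<partial>?M1)"
    by (rule Fubini_integral[OF int])
  also have "\<dots> = ip ?Q v (Top ?P k u)"
    unfolding ip_def Top_def
    by (intro Bochner_Integration.integral_cong refl) (simp add: mult.commute mult.left_commute flip: integral_mult_right_zero)
  finally show ?thesis .
qed

lemma supn_le: "(\<And>x. x \<in> S \<Longrightarrow> \<bar>f x\<bar> \<le> c) \<Longrightarrow> supn S f \<le> ennreal c"
  unfolding supn_def by (intro SUP_least ennreal_leI) auto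

lemma supn_ge: "x \<in> S \<Longrightarrow> ennreal \<bar>f x\<bar> \<le> supn S f"
  unfolding supn_def by (rule SUP_upper)

lemma L2norm_scale:
  assumes "n > 0" shows "L2norm S (\<lambda>x. f x / n) = L2norm S f / n"
proof -
  have "L2norm S (\<lambda>x. f x / n) = sqrt ((\<integral>x. (f x)^2 \<partial>lebesgue_on S) / n^2)"
    unfolding L2norm_def by (simp add: power_divide)
  also have "\<dots> = L2norm S f / n" using assms by (simp add: L2norm_def real_sqrt_divide)
  finally show ?thesis .
qed

lemma norm2inf_pt:
  fixes k :: "'q::euclidean_space \<Rightarrow> 'p::euclidean_space \<Rightarrow> real"
  assumes N: "norm_2inf Q P k \<le> ennreal c" and c: "0 \<le> c" and v: "sqint Q v" and z: "z \<in> P"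
  shows "\<bar>Tadj Q k v z\<bar> \<le> c * L2norm Q v"
proof (cases "L2norm Q v = 0")
  case True
  have "AE w in lebesgue_on Q. v w = 0" by (rule L2norm_zero_AE[OF v True])
  then have "AE w in lebesgue_on Q. k w z * v w = 0" by auto
  then have "Tadj Q k v z = 0" unfolding Tadj_def by (rule integral_eq_zero_AE)
  then show ?thesis using c by (simp add: L2norm_nonneg)
next
  case False
  define n where "n = L2norm Q v"
  have n: "n > 0" using False L2norm_nonneg[of Q v] by (simp add: n_def)
  define \<psi> where "\<psi> = (\<lambda>w. v w / n)"
  have "sqint Q (\<lambda>w. (1/n) * v w)" by (rule sqint_cmult[OF v])
  then have \<psi>s: "sqint Q \<psi>" by (rule sqint_cong) (simp add: \<psi>_def)
  have \<psi>n: "L2norm Q \<psi> \<le> 1" using L2norm_scale[OF n, of Q v] n by (simp add: \<psi>_def n_def)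
  have "supn P (Tadj Q k \<psi>) \<le> norm_2inf Q P k"
    unfolding norm_2inf_def by (rule SUP_upper) (use \<psi>s \<psi>n in auto)
  then have "ennreal \<bar>Tadj Q k \<psi> z\<bar> \<le> ennreal c" using supn_ge[OF z, of "Tadj Q k \<psi>"] N by simp
  then have le: "\<bar>Tadj Q k \<psi> z\<bar> \<le> c" using c by (simp add: ennreal_le_iff)
  have "Tadj Q k \<psi> z = Tadj Q k v z / n"
  proof -
    have "(\<lambda>w. k w z * (v w / n)) = (\<lambda>w. k w z * v w / n)" by simp
    then show ?thesis unfolding Tadj_def \<psi>_def by (simp only: integral_divide_zero)
  qed
  then have "\<bar>Tadj Q k v z\<bar> / n \<le> c" using le n by simp
  then show ?thesis using n by (simp add: n_def field_simps)
qed

lemma ip_bound_sup: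
  fixes S :: "'a::euclidean_space set"
  assumes f: "sqint S f" and u: "sqint S u" and B: "\<And>x. x \<in> S \<Longrightarrow> \<bar>f x\<bar> \<le> B" and S: "compact S"
  shows "\<bar>ip S f u\<bar> \<le> B * (\<integral>x. \<bar>u x\<bar> \<partial>lebesgue_on S)"
proof -
  have "\<bar>ip S f u\<bar> \<le> (\<integral>x. B * \<bar>u x\<bar> \<partial>lebesgue_on S)"
    unfolding ip_def
  proof (rule integral_abs_bound_integral)
    show "integrable (lebesgue_on S) (\<lambda>x. f x * u x)" by (rule sqint_mult_integrable[OF f u])
    show "integrable (lebesgue_on S) (\<lambda>x. B * \<bar>u x\<bar>)" using sqint_integrable[OF S u] by auto
    fix x assume "x \<in> space (lebesgue_on S)"
    then have "\<bar>f x\<bar> * \<bar>u x\<bar> \<le> B * \<bar>u x\<bar>" using B by (intro mult_right_mono) auto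
    then show "\<bar>f x * u x\<bar> \<le> B * \<bar>u x\<bar>" by (simp add: abs_mult)
  qed
  then show ?thesis by simp
qed

locale kctx =
  fixes a b :: real and k :: "real^'q \<Rightarrow> real^'p \<Rightarrow> real"
  assumes ab: "a < b" and kc: "cont_kernel (cube a b) (cube a b) k"
begin

abbreviation "PP \<equiv> (cube a b :: (real^'p) set)"
abbreviation "QQ \<equiv> (cube a b :: (real^'q) set)"

lemma PPc: "compact PP" by (rule compact_cube)
lemma QQc: "compact QQ" by (rule compact_cube)

lemma T_cont: "sqint PP u \<Longrightarrow> continuous_on QQ (Top PP k u)"
  unfolding Top_as_Tadj
  by (rule Tadj_cont[OF PPc QQc cont_kernel_swap[OF kc] sqint_integrable[OF PPc]])

lemma Ts_cont: "sqint QQ v \<Longrightarrow> continuous_on PP (Tadj QQ k v)"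
  by (rule Tadj_cont[OF QQc PPc kc sqint_integrable[OF QQc]])

lemma T_sqint: "sqint PP u \<Longrightarrow> sqint QQ (Top PP k u)"
  by (rule continuous_sqint[OF QQc T_cont])

lemma Ts_sqint: "sqint QQ v \<Longrightarrow> sqint PP (Tadj QQ k v)"
  by (rule continuous_sqint[OF PPc Ts_cont])

lemma T_int: "sqint PP u \<Longrightarrow> w \<in> QQ \<Longrightarrow> integrable (lebesgue_on PP) (\<lambda>z. k w z * u z)"
  using integrable_kv[OF PPc QQc cont_kernel_swap[OF kc], of w u] sqint_integrable[OF PPc, of u]
  by (simp add: swapk_def)

lemma Ts_int: "sqint QQ v \<Longrightarrow> z \<in> PP \<Longrightarrow> integrable (lebesgue_on QQ) (\<lambda>w. k w z * v w)"
  using integrable_kv[OF QQc PPc kc, of z v] sqint_integrable[OF QQc, of v] by simp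

lemma T_add: "sqint PP u1 \<Longrightarrow> sqint PP u2 \<Longrightarrow> w \<in> QQ \<Longrightarrow>
   Top PP k (\<lambda>x. u1 x + u2 x) w = Top PP k u1 w + Top PP k u2 w"
  unfolding Top_def using T_int[of u1 w] T_int[of u2 w] by (simp add: distrib_left)

lemma T_diff: "sqint PP u1 \<Longrightarrow> sqint PP u2 \<Longrightarrow> w \<in> QQ \<Longrightarrow>
   Top PP k (\<lambda>x. u1 x - u2 x) w = Top PP k u1 w - Top PP k u2 w"
  unfolding Top_def using T_int[of u1 w] T_int[of u2 w] by (simp add: right_diff_distrib)

lemma T_cmult: "Top PP k (\<lambda>x. c * u x) w = c * Top PP k u w"
  unfolding Top_def by (simp add: mult.left_commute)

lemma Ts_add: "sqint QQ u1 \<Longrightarrow> sqint QQ u2 \<Longrightarrow> z \<in> PP \<Longrightarrow>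
   Tadj QQ k (\<lambda>x. u1 x + u2 x) z = Tadj QQ k u1 z + Tadj QQ k u2 z"
  unfolding Tadj_def using Ts_int[of u1 z] Ts_int[of u2 z] by (simp add: distrib_left)

lemma Ts_diff: "sqint QQ u1 \<Longrightarrow> sqint QQ u2 \<Longrightarrow> z \<in> PP \<Longrightarrow>
   Tadj QQ k (\<lambda>x. u1 x - u2 x) z = Tadj QQ k u1 z - Tadj QQ k u2 z"
  unfolding Tadj_def using Ts_int[of u1 z] Ts_int[of u2 z] by (simp add: right_diff_distrib)

lemma Ts_cmult: "Tadj QQ k (\<lambda>x. c * u x) z = c * Tadj QQ k u z"
  unfolding Tadj_def by (simp add: mult.left_commute)

lemma T_cong: "(\<And>x. x \<in> PP \<Longrightarrow> u x = u' x) \<Longrightarrow> Top PP k u w = Top PP k u' w"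
  unfolding Top_def by (intro Bochner_Integration.integral_cong) auto

lemma Ts_cong: "(\<And>x. x \<in> QQ \<Longrightarrow> u x = u' x) \<Longrightarrow> Tadj QQ k u z = Tadj QQ k u' z"
  unfolding Tadj_def by (intro Bochner_Integration.integral_cong) auto

lemma adj: "sqint PP u \<Longrightarrow> sqint QQ v \<Longrightarrow> ip PP (Tadj QQ k v) u = ip QQ v (Top PP k u)"
  using adjoint[OF less_imp_le[OF ab] kc] by blast

lemma quad: "sqint PP g \<Longrightarrow> ip PP (Tadj QQ k (Top PP k g)) g = (L2norm QQ (Top PP k g))^2"
  by (simp add: adj T_sqint L2norm_sq)

lemma T_norm:
  assumes N: "norm_2inf QQ PP k \<le> ennreal c" and c: "0 \<le> c" and u: "sqint PP u"
  shows "L2norm QQ (Top PP k u) \<le> c * sqrt (measure lebesgue PP) * L2norm PP u"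
proof -
  let ?t = "L2norm QQ (Top PP k u)"
  have "?t^2 = ip PP (Tadj QQ k (Top PP k u)) u" using quad[OF u] adj[OF u T_sqint[OF u]]
    by (simp add: L2norm_sq)
  also have "\<dots> \<le> \<bar>ip PP (Tadj QQ k (Top PP k u)) u\<bar>" by simp
  also have "\<dots> \<le> (c * ?t) * (\<integral>x. \<bar>u x\<bar> \<partial>lebesgue_on PP)"
    by (rule ip_bound_sup[OF Ts_sqint[OF T_sqint[OF u]] u _ PPc])
       (rule norm2inf_pt[OF N c T_sqint[OF u]])
  also have "\<dots> \<le> (c * ?t) * (sqrt (measure lebesgue PP) * L2norm PP u)"
    by (intro mult_left_mono l1_le_L2[OF PPc u]) (simp_all add: c L2norm_nonneg)
  finally have *: "?t * ?t \<le> ?t * (c * sqrt (measure lebesgue PP) * L2norm PP u)"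
    by (simp add: power2_eq_square mult_ac)
  show ?thesis
  proof (cases "?t = 0")
    case True then show ?thesis using c by (simp add: L2norm_nonneg)
  next
    case False
    then have "?t > 0" using L2norm_nonneg[of QQ "Top PP k u"] by simp
    with * show ?thesis by simp
  qed
qed

end

lemma L2norm_le_sup:
  fixes S :: "'a::euclidean_space set"
  assumes S: "compact S" and f: "sqint S f" and B: "\<And>x. x \<in> S \<Longrightarrow> \<bar>f x\<bar> \<le> B"
  shows "L2norm S f \<le> sqrt (measure lebesgue S) * B"
proof (cases "S = {}")
  case True
  then show ?thesis by (simp add: L2norm_def)
next
  case False
  have B0: "0 \<le> B" using B False by (meson abs_ge_zero ex_in_conv order_trans)
  interpret finite_measure "lebesgue_on S" using fin_lebesgue_on[OF S] .
  have "(\<integral>x. (f x)^2 \<partial>lebesgue_on S) \<le> (\<integral>x. B^2 \<partial>lebesgue_on S)"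
  proof (rule integral_mono)
    show "integrable (lebesgue_on S) (\<lambda>x. (f x)^2)" using f unfolding sqint_def by auto
    show "integrable (lebesgue_on S) (\<lambda>x. B^2)" by simp
    fix x assume x: "x \<in> space (lebesgue_on S)"
    then have "\<bar>f x\<bar> \<le> B" using B by simp
    then show "(f x)^2 \<le> B^2" by (metis abs_ge_zero power2_abs power_mono)
  qed
  also have "\<dots> = B^2 * measure lebesgue S"
    using compact_sets_lebesgue[OF S] by (simp add: measure_restrict_space)
  finally have "L2norm S f \<le> sqrt (B^2 * measure lebesgue S)" unfolding L2norm_def
    by (rule real_sqrt_le_mono)
  also have "\<dots> = B * sqrt (measure lebesgue S)" using B0 by (simp add: real_sqrt_mult)
  finally show ?thesis by (simp add: mult.commute)
qed

context kctx begin

abbreviation AA :: "(real^'p \<Rightarrow> real) \<Rightarrow> real^'p \<Rightarrow> real" where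
  "AA g \<equiv> Tadj QQ k (Top PP k g)"

lemma A_sqint: "sqint PP u \<Longrightarrow> sqint PP (AA u)"
  by (intro Ts_sqint T_sqint)

lemma A_cont: "sqint PP u \<Longrightarrow> continuous_on PP (AA u)"
  by (intro Ts_cont T_sqint)

lemma A_diff: "sqint PP u1 \<Longrightarrow> sqint PP u2 \<Longrightarrow> z \<in> PP \<Longrightarrow>
   AA (\<lambda>x. u1 x - u2 x) z = AA u1 z - AA u2 z"
proof -
  assume u: "sqint PP u1" "sqint PP u2" "z \<in> PP"
  have "AA (\<lambda>x. u1 x - u2 x) z = Tadj QQ k (\<lambda>w. Top PP k u1 w - Top PP k u2 w) z"
    by (rule Ts_cong) (simp add: T_diff u)
  also have "\<dots> = AA u1 z - AA u2 z" by (rule Ts_diff) (simp_all add: T_sqint u)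
  finally show ?thesis .
qed

lemma A_add: "sqint PP u1 \<Longrightarrow> sqint PP u2 \<Longrightarrow> z \<in> PP \<Longrightarrow>
   AA (\<lambda>x. u1 x + u2 x) z = AA u1 z + AA u2 z"
proof -
  assume u: "sqint PP u1" "sqint PP u2" "z \<in> PP"
  have "AA (\<lambda>x. u1 x + u2 x) z = Tadj QQ k (\<lambda>w. Top PP k u1 w + Top PP k u2 w) z"
    by (rule Ts_cong) (simp add: T_add u)
  also have "\<dots> = AA u1 z + AA u2 z" by (rule Ts_add) (simp_all add: T_sqint u)
  finally show ?thesis .
qed

lemma A_cmult: "AA (\<lambda>x. c * u x) z = c * AA u z"
proof -
  have "Top PP k (\<lambda>x. c * u x) = (\<lambda>w. c * Top PP k u w)" by (simp add: T_cmult fun_eq_iff)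
  then show ?thesis by (simp add: Ts_cmult)
qed

lemma A_cong: "(\<And>x. x \<in> PP \<Longrightarrow> u x = u' x) \<Longrightarrow> AA u z = AA u' z"
proof -
  assume e: "\<And>x. x \<in> PP \<Longrightarrow> u x = u' x"
  have "Top PP k u = Top PP k u'" by (rule ext, rule T_cong) (rule e)
  then show ?thesis by simp
qed

lemma nrm_finite: "\<exists>c\<ge>0. norm_2inf QQ PP k \<le> ennreal c"
proof -
  obtain M where M: "0 \<le> M" "\<forall>w\<in>QQ. \<forall>z\<in>PP. \<bar>k w z\<bar> \<le> M" using kernel_bound[OF QQc PPc kc] by blast
  let ?c = "M * sqrt (measure lebesgue QQ)"
  have "norm_2inf QQ PP k \<le> ennreal ?c"
    unfolding norm_2inf_def
  proof (rule SUP_least, rule supn_le)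
    fix \<psi> z assume \<psi>: "\<psi> \<in> {\<psi>. sqint QQ \<psi> \<and> L2norm QQ \<psi> \<le> 1}" and z: "z \<in> PP"
    have "\<bar>Tadj QQ k \<psi> z\<bar> \<le> M * (\<integral>w. \<bar>\<psi> w\<bar> \<partial>lebesgue_on QQ)"
      using Tadj_bound[OF QQc PPc kc z sqint_integrable[OF QQc] M(2)] \<psi> by auto
    also have "\<dots> \<le> M * (sqrt (measure lebesgue QQ) * L2norm QQ \<psi>)"
      using l1_le_L2[OF QQc, of \<psi>] \<psi> M(1) by (intro mult_left_mono) auto
    also have "\<dots> \<le> M * (sqrt (measure lebesgue QQ) * 1)"
      using \<psi> M(1) by (intro mult_left_mono) auto
    finally show "\<bar>Tadj QQ k \<psi> z\<bar> \<le> ?c" by simp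
  qed
  then show ?thesis using M(1) by (intro exI[of _ ?c]) auto
qed

lemma A_sup:
  assumes N: "norm_2inf QQ PP k \<le> ennreal c" "0 \<le> c" and u: "sqint PP u" and z: "z \<in> PP"
  shows "\<bar>AA u z\<bar> \<le> c * L2norm QQ (Top PP k u)"
  by (rule norm2inf_pt[OF N T_sqint[OF u] z])

lemma A_L2:
  assumes N: "norm_2inf QQ PP k \<le> ennreal c" "0 \<le> c" and g: "sqint PP g"
  shows "L2norm PP (AA g) \<le> c * sqrt (measure lebesgue PP) * L2norm QQ (Top PP k g)"
proof -
  let ?c1 = "c * sqrt (measure lebesgue PP)"
  let ?a = "L2norm PP (AA g)" and ?t = "L2norm QQ (Top PP k g)"
  have "?a^2 = ip QQ (Top PP k g) (Top PP k (AA g))"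
    using adj[OF A_sqint[OF g] T_sqint[OF g]] by (simp add: L2norm_sq)
  also have "\<dots> \<le> \<bar>ip QQ (Top PP k g) (Top PP k (AA g))\<bar>" by simp
  also have "\<dots> \<le> ?t * L2norm QQ (Top PP k (AA g))"
    by (rule cauchy_schwarz_ip[OF T_sqint[OF g] T_sqint[OF A_sqint[OF g]]])
  also have "\<dots> \<le> ?t * (?c1 * ?a)"
    by (intro mult_left_mono T_norm[OF N A_sqint[OF g]]) (simp add: L2norm_nonneg)
  finally have *: "?a * ?a \<le> ?a * (?c1 * ?t)" by (simp add: power2_eq_square mult_ac)
  show ?thesis
  proof (cases "?a = 0")
    case True then show ?thesis using N by (simp add: L2norm_nonneg)
  next
    case False
    then have "?a > 0" using L2norm_nonneg[of PP "AA g"] by simp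
    with * show ?thesis by simp
  qed
qed

lemma contraction:
  assumes N: "norm_2inf QQ PP k \<le> ennreal c" "0 \<le> c" and g: "sqint PP g"
    and cc: "(c * sqrt (measure lebesgue PP))^2 \<le> cc" "0 < cc"
  shows "L2norm PP (\<lambda>z. cc * g z - AA g z) \<le> cc * L2norm PP g"
proof -
  let ?c1 = "c * sqrt (measure lebesgue PP)"
  let ?t = "L2norm QQ (Top PP k g)"
  have cg: "sqint PP (\<lambda>z. cc * g z)" by (rule sqint_cmult[OF g])
  have Ag: "sqint PP (AA g)" by (rule A_sqint[OF g])
  have "ip PP (\<lambda>z. cc * g z - AA g z) (\<lambda>z. cc * g z - AA g z)
      = cc^2 * ip PP g g - 2 * cc * ip PP (AA g) g + ip PP (AA g) (AA g)"
    using cg Ag g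
    by (simp add: ip_diff_left ip_diff_right sqint_diff ip_cmult_left ip_cmult_right ip_comm[of PP g "AA g"]
        power2_eq_square algebra_simps)
  also have "ip PP (AA g) g = ?t^2" by (rule quad[OF g])
  also have "ip PP (AA g) (AA g) = (L2norm PP (AA g))^2" by (simp add: L2norm_sq)
  also have "(L2norm PP (AA g))^2 \<le> (?c1 * ?t)^2"
    using A_L2[OF N g] by (intro power_mono) (simp_all add: L2norm_nonneg)
  also have "(?c1 * ?t)^2 = ?c1^2 * ?t^2" by (simp add: power_mult_distrib)
  finally have "ip PP (\<lambda>z. cc * g z - AA g z) (\<lambda>z. cc * g z - AA g z)
      \<le> cc^2 * ip PP g g - 2 * cc * ?t^2 + ?c1^2 * ?t^2" by simp
  also have "\<dots> \<le> cc^2 * ip PP g g"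
  proof -
    have "?c1^2 * ?t^2 \<le> cc * ?t^2" using cc by (intro mult_right_mono) auto
    also have "\<dots> \<le> 2 * cc * ?t^2" using cc by (intro mult_right_mono) auto
    finally show ?thesis by simp
  qed
  finally have "sqrt (ip PP (\<lambda>z. cc * g z - AA g z) (\<lambda>z. cc * g z - AA g z)) \<le> sqrt (cc^2 * ip PP g g)"
    by (rule real_sqrt_le_mono)
  then show ?thesis using cc by (simp add: L2norm_eq_sqrt real_sqrt_mult)
qed

end

lemma geom_rec_bound0:
  fixes x :: "nat \<Rightarrow> real"
  assumes r: "0 \<le> r" "r \<le> q" and E: "0 \<le> E" and x0: "x 0 \<le> C" and C: "0 \<le> C" "E \<le> C * (q - r)"
    and rec: "\<And>m. x (Suc m) \<le> r * x m + E * r^m"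
  shows "x m \<le> C * q^m"
proof (induction m)
  case 0 then show ?case using x0 by simp
next
  case (Suc m)
  have "x (Suc m) \<le> r * (C * q^m) + E * r^m"
    using rec[of m] mult_left_mono[OF Suc r(1)] by linarith
  also have "E * r^m \<le> E * q^m" using E r by (intro mult_left_mono power_mono) auto
  also have "E * q^m \<le> C * (q - r) * q^m" using C r by (intro mult_right_mono) auto
  also have "r * (C * q^m) + C * (q - r) * q^m = C * q^(Suc m)" by (simp add: algebra_simps)
  finally show ?case by simp
qed

lemma geom_rec_bound:
  fixes x :: "nat \<Rightarrow> real"
  assumes r: "0 \<le> r" "r < 1" and E: "0 \<le> E" and x0: "x 0 \<le> D0"
    and rec: "\<And>m. x (Suc m) \<le> r * x m + E * r^m"
  shows "x m \<le> max D0 (E / ((1 + r)/2 - r)) * ((1 + r)/2)^m"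
proof (rule geom_rec_bound0[OF r(1) _ E _ _ _ rec])
  show "r \<le> (1 + r) / 2" using r by simp
  show "x 0 \<le> max D0 (E / ((1 + r) / 2 - r))" using x0 by simp
  have "0 \<le> E / ((1 + r)/2 - r)" using E r by (intro divide_nonneg_nonneg) auto
  then show "0 \<le> max D0 (E / ((1 + r) / 2 - r))" by (simp add: le_max_iff_disj)
  have "E = E / ((1 + r)/2 - r) * ((1 + r)/2 - r)" using r by simp
  also have "\<dots> \<le> max D0 (E / ((1 + r) / 2 - r)) * ((1 + r)/2 - r)" using r by (intro mult_right_mono) auto
  finally show "E \<le> max D0 (E / ((1 + r) / 2 - r)) * ((1 + r) / 2 - r)" .
qed

context kctx begin

lemma exists_sol:
  assumes \<alpha>: "0 < \<alpha>" and h: "continuous_on PP h"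
  shows "\<exists>g. continuous_on PP g \<and> (\<forall>z. z \<notin> PP \<longrightarrow> g z = 0) \<and> (\<forall>z\<in>PP. \<alpha> * g z + AA g z = h z)"
proof -
  obtain c where c: "0 \<le> c" "norm_2inf QQ PP k \<le> ennreal c" using nrm_finite by blast
  define c1 where "c1 = c * sqrt (measure lebesgue PP)"
  have c1: "0 \<le> c1" using c by (simp add: c1_def)
  define cc where "cc = c1^2 + 1"
  have "0 \<le> c1^2" by simp
  then have cc: "c1^2 \<le> cc" "0 < cc" unfolding cc_def by linarith+
  define r where "r = cc / (\<alpha> + cc)"
  have r: "0 \<le> r" "r < 1" using cc \<alpha> by (auto simp: r_def)
  define \<Phi> where "\<Phi> = (\<lambda>g z. if z \<in> PP then (h z + cc * g z - AA g z) / (\<alpha> + cc) else 0)"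
  define G where "G = (\<lambda>m. (\<Phi> ^^ m) (\<lambda>z. 0))"
  have GS: "G (Suc m) = \<Phi> (G m)" for m by (simp add: G_def)
  have G0: "G 0 = (\<lambda>z. 0)" by (simp add: G_def)
  have Phi_cont: "continuous_on PP (\<Phi> g)" if g: "continuous_on PP g" for g
  proof -
    have "continuous_on PP (\<lambda>z. (h z + cc * g z - AA g z) / (\<alpha> + cc))"
      using h g A_cont[OF continuous_sqint[OF PPc g]] \<alpha> cc by (intro continuous_intros) auto
    then show ?thesis by (rule continuous_on_cong[THEN iffD1, rotated 2]) (auto simp: \<Phi>_def)
  qed
  have Gc: "continuous_on PP (G m)" for m
    by (induction m) (simp_all add: G0 GS Phi_cont)
  have Gs: "sqint PP (G m)" for m by (rule continuous_sqint[OF PPc Gc])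
  have Gout: "z \<notin> PP \<Longrightarrow> G m z = 0" for m z
    by (cases m) (simp_all add: G0 GS \<Phi>_def)
  define d where "d = (\<lambda>m z. G (Suc m) z - G m z)"
  have ds: "sqint PP (d m)" for m unfolding d_def by (intro sqint_diff Gs)
  have dout: "z \<notin> PP \<Longrightarrow> d m z = 0" for m z by (simp add: d_def Gout)
  have drec: "d (Suc m) z = (cc * d m z - AA (d m) z) / (\<alpha> + cc)" if z: "z \<in> PP" for m z
  proof -
    have Ad: "AA (d m) z = AA (G (Suc m)) z - AA (G m) z" unfolding d_def by (rule A_diff[OF Gs Gs z])
    have e1: "G (Suc (Suc m)) z = (h z + cc * G (Suc m) z - AA (G (Suc m)) z) / (\<alpha> + cc)"
      using z unfolding GS[of "Suc m"] \<Phi>_def by simp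
    have e2: "G (Suc m) z = (h z + cc * G m z - AA (G m) z) / (\<alpha> + cc)"
      using z unfolding GS[of m] \<Phi>_def by simp
    have dmz: "d m z = G (Suc m) z - G m z" "d (Suc m) z = G (Suc (Suc m)) z - G (Suc m) z"
      by (simp_all add: d_def)
    have "d (Suc m) z = (cc * (G (Suc m) z - G m z) - (AA (G (Suc m)) z - AA (G m) z)) / (\<alpha> + cc)"
    proof -
      have "d (Suc m) z = (h z + cc * G (Suc m) z - AA (G (Suc m)) z) / (\<alpha> + cc)
           - (h z + cc * G m z - AA (G m) z) / (\<alpha> + cc)"
        using dmz(2) e1 e2 by linarith
      moreover have num: "(h z + cc * G (Suc m) z - AA (G (Suc m)) z) - (h z + cc * G m z - AA (G m) z)
          = cc * (G (Suc m) z - G m z) - (AA (G (Suc m)) z - AA (G m) z)" by (simp add: algebra_simps)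
      ultimately show ?thesis by (metis diff_divide_distrib)
    qed
    also have "\<dots> = (cc * d m z - AA (d m) z) / (\<alpha> + cc)" by (simp only: dmz(1) Ad)
    finally show ?thesis .
  qed
  have dL2: "L2norm PP (d (Suc m)) \<le> r * L2norm PP (d m)" for m
  proof -
    have "L2norm PP (d (Suc m)) = L2norm PP (\<lambda>z. (cc * d m z - AA (d m) z) / (\<alpha> + cc))"
      by (rule L2norm_cong) (simp add: drec)
    also have "\<dots> = L2norm PP (\<lambda>z. cc * d m z - AA (d m) z) / (\<alpha> + cc)"
      using \<alpha> cc by (intro L2norm_scale) auto
    also have "\<dots> \<le> cc * L2norm PP (d m) / (\<alpha> + cc)"
    proof (rule divide_right_mono)
      show "L2norm PP (\<lambda>z. cc * d m z - AA (d m) z) \<le> cc * L2norm PP (d m)"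
        by (rule contraction[OF c(2) c(1) ds]) (use cc in \<open>auto simp: c1_def[symmetric]\<close>)
      show "0 \<le> \<alpha> + cc" using \<alpha> cc by simp
    qed
    finally show ?thesis by (simp add: r_def)
  qed
  have dL2': "L2norm PP (d m) \<le> r^m * L2norm PP (d 0)" for m
  proof (induction m)
    case (Suc m)
    have "L2norm PP (d (Suc m)) \<le> r * L2norm PP (d m)" by (rule dL2)
    also have "\<dots> \<le> r * (r^m * L2norm PP (d 0))" using Suc r by (intro mult_left_mono) auto
    finally show ?case by simp
  qed simp
  define E where "E = c * c1 * L2norm PP (d 0) / (\<alpha> + cc)"
  have E: "0 \<le> E" using c c1 \<alpha> cc by (simp add: E_def L2norm_nonneg)
  have dsup: "\<bar>d (Suc m) z\<bar> \<le> r * \<bar>d m z\<bar> + E * r^m" if z: "z \<in> PP" for m z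
  proof -
    have "\<bar>AA (d m) z\<bar> \<le> c * L2norm QQ (Top PP k (d m))" by (rule A_sup[OF c(2) c(1) ds z])
    also have "\<dots> \<le> c * (c1 * L2norm PP (d m))"
      using T_norm[OF c(2) c(1) ds] c by (intro mult_left_mono) (auto simp: c1_def)
    also have "\<dots> \<le> c * (c1 * (r^m * L2norm PP (d 0)))"
      using dL2' c c1 by (intro mult_left_mono) auto
    finally have Ab: "\<bar>AA (d m) z\<bar> \<le> c * c1 * L2norm PP (d 0) * r^m" by (simp add: mult_ac)
    have "\<bar>d (Suc m) z\<bar> = \<bar>cc * d m z - AA (d m) z\<bar> / (\<alpha> + cc)" using drec[OF z] \<alpha> cc by simp
    also have "\<dots> \<le> (cc * \<bar>d m z\<bar> + \<bar>AA (d m) z\<bar>) / (\<alpha> + cc)"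
      using \<alpha> cc by (intro divide_right_mono) (auto simp: abs_mult intro: abs_triangle_ineq4[THEN order_trans])
    also have "\<dots> \<le> (cc * \<bar>d m z\<bar> + c * c1 * L2norm PP (d 0) * r^m) / (\<alpha> + cc)"
      using \<alpha> cc Ab by (intro divide_right_mono) auto
    also have "\<dots> = r * \<bar>d m z\<bar> + E * r^m" by (simp add: r_def E_def add_divide_distrib)
    finally show ?thesis .
  qed
  obtain D0 where D0: "\<And>z. z \<in> PP \<Longrightarrow> \<bar>d 0 z\<bar> \<le> D0" and D00: "0 \<le> D0"
  proof -
    have "continuous_on PP (d 0)" unfolding d_def using Gc by (intro continuous_intros)
    then obtain B where "\<forall>z\<in>PP. \<bar>d 0 z\<bar> \<le> B" using continuous_bounded_on[OF PPc] by blast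
    then show ?thesis using that[of "max B 0"] by force
  qed
  define q where "q = (1 + r)/2"
  define Cq where "Cq = max D0 (E / ((1 + r)/2 - r))"
  have q: "0 \<le> q" "q < 1" using r by (auto simp: q_def)
  have dbound: "\<bar>d m z\<bar> \<le> Cq * q^m" for m z
  proof (cases "z \<in> PP")
    case True
    show ?thesis unfolding Cq_def q_def
      by (rule geom_rec_bound[OF r E, where x="\<lambda>m. \<bar>d m z\<bar>"]) (use D0 dsup True in auto)
  next
    case False
    have "0 \<le> Cq * q^m"
    proof -
      have "0 \<le> \<bar>d 0 z\<bar>" by simp
      have "0 \<le> Cq * q^0"
        unfolding Cq_def q_def
        by (rule order_trans[OF _ geom_rec_bound[OF r E, where x="\<lambda>m. 0"]]) (auto simp: r D00 E)
      then have "0 \<le> Cq" by simp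
      then show ?thesis using q by simp
    qed
    then show ?thesis using dout[OF False] by simp
  qed
  have summ: "summable (\<lambda>m. Cq * q^m)" using q by (intro summable_mult summable_geometric) auto
  have ul0: "uniform_limit PP (\<lambda>n z. \<Sum>i<n. d i z) (\<lambda>z. \<Sum>i. d i z) sequentially"
    by (rule Weierstrass_m_test[OF _ summ]) (simp add: dbound)
  have Gsum: "(\<Sum>i<n. d i z) = G n z" for n z
    unfolding d_def using sum_lessThan_telescope[of "\<lambda>i. G i z" n] by (simp add: G0)
  define g where "g = (\<lambda>z. if z \<in> PP then (\<Sum>i. d i z) else 0)"
  have ul: "uniform_limit PP G g sequentially"
    using ul0 by (subst (asm) uniform_limit_cong'[where g="\<lambda>n. G n" and i=g]) (auto simp: Gsum g_def)
  have gc: "continuous_on PP g"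
    by (rule uniform_limit_theorem[OF _ ul]) (auto simp: Gc)
  have gs: "sqint PP g" by (rule continuous_sqint[OF PPc gc])
  have gout: "\<forall>z. z \<notin> PP \<longrightarrow> g z = 0" by (simp add: g_def)
  have eq: "\<alpha> * g z + AA g z = h z" if z: "z \<in> PP" for z
  proof -
    have L1: "(\<lambda>m. G m z) \<longlonglongrightarrow> g z" by (rule tendsto_uniform_limitI[OF ul z])
    have L2: "(\<lambda>m. AA (G m) z) \<longlonglongrightarrow> AA g z"
    proof (rule LIMSEQ_I)
      fix e :: real assume e: "0 < e"
      define K where "K = c * c1 * sqrt (measure lebesgue PP) + 1"
      have K: "0 < K" using c c1 by (simp add: K_def add_nonneg_pos)
      obtain N where N: "\<And>n x. n \<ge> N \<Longrightarrow> x \<in> PP \<Longrightarrow> dist (G n x) (g x) < e / K"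
        using ul e K unfolding uniform_limit_sequentially_iff by (meson divide_pos_pos)
      show "\<exists>no. \<forall>n\<ge>no. norm (AA (G n) z - AA g z) < e"
      proof (intro exI allI impI)
        fix n assume n: "n \<ge> N"
        have ds': "sqint PP (\<lambda>x. G n x - g x)" by (intro sqint_diff Gs gs)
        have "\<bar>AA (G n) z - AA g z\<bar> = \<bar>AA (\<lambda>x. G n x - g x) z\<bar>" by (simp add: A_diff[OF Gs gs z])
        also have "\<dots> \<le> c * L2norm QQ (Top PP k (\<lambda>x. G n x - g x))" by (rule A_sup[OF c(2) c(1) ds' z])
        also have "\<dots> \<le> c * (c1 * L2norm PP (\<lambda>x. G n x - g x))"
          using T_norm[OF c(2) c(1) ds'] c by (intro mult_left_mono) (auto simp: c1_def)
        also have "\<dots> \<le> c * (c1 * (sqrt (measure lebesgue PP) * (e / K)))"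
        proof -
          have "L2norm PP (\<lambda>x. G n x - g x) \<le> sqrt (measure lebesgue PP) * (e / K)"
            by (rule L2norm_le_sup[OF PPc ds']) (use N[OF n] in \<open>auto simp: dist_real_def less_imp_le\<close>)
          then show ?thesis using c c1 by (intro mult_left_mono) auto
        qed
        also have "\<dots> = (K - 1) * (e / K)" by (simp add: K_def mult_ac)
        also have "\<dots> < e" using K e by (simp add: field_simps)
        finally show "norm (AA (G n) z - AA g z) < e" by simp
      qed
    qed
    have L3: "(\<lambda>m. G (Suc m) z) \<longlonglongrightarrow> (h z + cc * g z - AA g z) / (\<alpha> + cc)"
    proof -
      have "(\<lambda>m. (h z + cc * G m z - AA (G m) z) / (\<alpha> + cc)) \<longlonglongrightarrow> (h z + cc * g z - AA g z) / (\<alpha> + cc)"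
        using \<alpha> cc by (intro tendsto_intros L1 L2) auto
      then show ?thesis using z by (simp add: GS \<Phi>_def)
    qed
    have "g z = (h z + cc * g z - AA g z) / (\<alpha> + cc)"
      by (rule LIMSEQ_unique[OF LIMSEQ_Suc[OF L1] L3])
    then show ?thesis using \<alpha> cc by (simp add: field_simps)
  qed
  show ?thesis using gc gout eq by blast
qed

end

context kctx begin

lemma uniq_sol:
  assumes \<alpha>: "0 < \<alpha>"
    and g1: "continuous_on PP g1" "\<forall>z. z \<notin> PP \<longrightarrow> g1 z = 0" "\<forall>z\<in>PP. \<alpha> * g1 z + AA g1 z = h z"
    and g2: "continuous_on PP g2" "\<forall>z. z \<notin> PP \<longrightarrow> g2 z = 0" "\<forall>z\<in>PP. \<alpha> * g2 z + AA g2 z = h z"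
  shows "g1 = g2"
proof -
  have s1: "sqint PP g1" and s2: "sqint PP g2" using g1(1) g2(1) by (auto intro: continuous_sqint[OF PPc])
  define dd where "dd = (\<lambda>z. g1 z - g2 z)"
  have ds: "sqint PP dd" unfolding dd_def by (rule sqint_diff[OF s1 s2])
  have dc: "continuous_on PP dd" unfolding dd_def using g1(1) g2(1) by (intro continuous_intros)
  have e0: "\<alpha> * dd z + AA dd z = 0" if z: "z \<in> PP" for z
    using A_diff[OF s1 s2 z] g1(3)[rule_format, OF z] g2(3)[rule_format, OF z]
    unfolding dd_def right_diff_distrib by linarith
  have "0 = ip PP (\<lambda>z. \<alpha> * dd z + AA dd z) dd"
  proof -
    have "ip PP (\<lambda>z. \<alpha> * dd z + AA dd z) dd = ip PP (\<lambda>z. 0) dd" by (rule ip_cong) (simp_all add: e0)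
    then show ?thesis by (simp add: ip_def)
  qed
  also have "\<dots> = \<alpha> * ip PP dd dd + ip PP (AA dd) dd"
    using ds A_sqint[OF ds] by (simp add: ip_add_left sqint_cmult ip_cmult_left)
  also have "\<dots> = \<alpha> * (L2norm PP dd)^2 + (L2norm QQ (Top PP k dd))^2"
    by (simp add: quad[OF ds] L2norm_sq)
  finally have "\<alpha> * (L2norm PP dd)^2 + (L2norm QQ (Top PP k dd))^2 = 0" by simp
  moreover have "0 \<le> (L2norm QQ (Top PP k dd))^2" by simp
  ultimately have "\<alpha> * (L2norm PP dd)^2 \<le> 0" by linarith
  then have "(L2norm PP dd)^2 \<le> 0" using \<alpha> by (simp add: mult_le_0_iff)
  then have n0: "L2norm PP dd = 0" by simp
  have "dd z = 0" if "z \<in> PP" for z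
    by (rule L2norm_zero_continuous[OF PPc cube_closure_interior[OF ab] dc n0 that])
  then have "\<And>z. z \<in> PP \<Longrightarrow> g1 z = g2 z" by (simp add: dd_def)
  then show ?thesis using g1(2) g2(2) by (metis ext)
qed

lemma reg_inv_char:
  assumes \<alpha>: "0 < \<alpha>" and h: "continuous_on PP h"
  shows "continuous_on PP (reg_inv PP QQ k \<alpha> h) \<and> (\<forall>z. z \<notin> PP \<longrightarrow> reg_inv PP QQ k \<alpha> h z = 0)
     \<and> (\<forall>z\<in>PP. \<alpha> * reg_inv PP QQ k \<alpha> h z + AA (reg_inv PP QQ k \<alpha> h) z = h z)"
proof -
  have "\<exists>!g. continuous_on PP g \<and> (\<forall>z. z \<notin> PP \<longrightarrow> g z = 0) \<and> (\<forall>z\<in>PP. \<alpha> * g z + AA g z = h z)"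
  proof (rule ex_ex1I)
    show "\<exists>g. continuous_on PP g \<and> (\<forall>z. z \<notin> PP \<longrightarrow> g z = 0) \<and> (\<forall>z\<in>PP. \<alpha> * g z + AA g z = h z)"
      by (rule exists_sol[OF \<alpha> h])
  next
    fix g1 g2
    assume "continuous_on PP g1 \<and> (\<forall>z. z \<notin> PP \<longrightarrow> g1 z = 0) \<and> (\<forall>z\<in>PP. \<alpha> * g1 z + AA g1 z = h z)"
      "continuous_on PP g2 \<and> (\<forall>z. z \<notin> PP \<longrightarrow> g2 z = 0) \<and> (\<forall>z\<in>PP. \<alpha> * g2 z + AA g2 z = h z)"
    then show "g1 = g2" using uniq_sol[OF \<alpha>] by blast
  qed
  then show ?thesis unfolding reg_inv_def by (rule theI')
qed

lemma reg_proj_char: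
  assumes \<alpha>: "0 < \<alpha>" and \<phi>: "continuous_on PP \<phi>"
  shows "continuous_on PP (reg_proj PP QQ k \<alpha> \<phi>) \<and> (\<forall>z. z \<notin> PP \<longrightarrow> reg_proj PP QQ k \<alpha> \<phi> z = 0)
     \<and> (\<forall>z\<in>PP. \<alpha> * reg_proj PP QQ k \<alpha> \<phi> z + AA (reg_proj PP QQ k \<alpha> \<phi>) z = AA \<phi> z)"
  unfolding reg_proj_def
  by (rule reg_inv_char[OF \<alpha> A_cont[OF continuous_sqint[OF PPc \<phi>]]])

end

lemma bessel_gen:
  assumes J: "finite J" and f: "\<And>j. j \<in> J \<Longrightarrow> sqint S (f j)" and lam: "\<And>j. j \<in> J \<Longrightarrow> 0 < lam j"
    and orth: "\<And>i j. i \<in> J \<Longrightarrow> j \<in> J \<Longrightarrow> ip S (f i) (f j) = (if i = j then lam j else 0)"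
    and v: "sqint S v"
  shows "(\<Sum>j\<in>J. (ip S v (f j))^2 / lam j) \<le> ip S v v"
proof -
  define c where "c = (\<lambda>j. ip S v (f j) / lam j)"
  define s where "s = (\<lambda>x. \<Sum>j\<in>J. c j * f j x)"
  have fs: "\<And>j. j \<in> J \<Longrightarrow> sqint S (\<lambda>x. c j * f j x)" using f by (intro sqint_cmult) auto
  have ss: "sqint S s" unfolding s_def by (rule sqint_sum[OF J fs])
  have ips_f: "ip S s (f i) = c i * lam i" if i: "i \<in> J" for i
  proof -
    have "ip S s (f i) = (\<Sum>j\<in>J. ip S (\<lambda>x. c j * f j x) (f i))"
      unfolding s_def by (rule ip_sum_left[OF J fs f[OF i]])
    also have "\<dots> = (\<Sum>j\<in>J. c j * (if j = i then lam i else 0))"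
      by (intro sum.cong refl) (simp add: ip_cmult_left orth i)
    also have "\<dots> = c i * lam i" using J i by (simp add: if_distrib sum.delta cong: if_cong)
    finally show ?thesis .
  qed
  have ivs: "ip S v s = (\<Sum>j\<in>J. (ip S v (f j))^2 / lam j)"
  proof -
    have "ip S v s = (\<Sum>j\<in>J. ip S v (\<lambda>x. c j * f j x))" unfolding s_def by (rule ip_sum_right[OF J fs v])
    also have "\<dots> = (\<Sum>j\<in>J. (ip S v (f j))^2 / lam j)"
      by (intro sum.cong refl) (simp only: ip_cmult_right, simp add: c_def power2_eq_square)
    finally show ?thesis .
  qed
  have iss: "ip S s s = (\<Sum>j\<in>J. (ip S v (f j))^2 / lam j)"
  proof -
    have "ip S s s = ip S s (\<lambda>x. \<Sum>j\<in>J. c j * f j x)" by (simp add: s_def)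
    also have "\<dots> = (\<Sum>j\<in>J. ip S s (\<lambda>x. c j * f j x))" by (rule ip_sum_right[OF J fs ss])
    also have "\<dots> = (\<Sum>j\<in>J. c j * (c j * lam j))"
      by (intro sum.cong refl) (simp add: ip_cmult_right ips_f)
    also have "\<dots> = (\<Sum>j\<in>J. (ip S v (f j))^2 / lam j)"
      using lam by (intro sum.cong refl) (simp add: c_def power2_eq_square field_simps)
    finally show ?thesis .
  qed
  have "0 \<le> ip S (\<lambda>x. v x - s x) (\<lambda>x. v x - s x)" by (rule ip_self_nonneg)
  also have "\<dots> = ip S v v - 2 * ip S v s + ip S s s"
    using v ss by (simp add: ip_diff_left ip_diff_right sqint_diff ip_comm[of S s v] algebra_simps)
  finally show ?thesis using ivs iss by simp
qed

context kctx begin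

lemma eig_apply:
  assumes E: "eigsys PP (\<lambda>f. AA f) e lam"
  shows "L2norm PP (\<lambda>x. AA (e j) x - lam j * e j x) = 0"
proof -
  have es: "\<And>j. sqint PP (e j)" and orth: "\<And>i j. ip PP (e i) (e j) = (if i = j then 1 else 0)"
    and ls: "\<And>f. sqint PP f \<Longrightarrow> L2_sums PP (\<lambda>j. lam j * ip PP f (e j)) e (AA f)"
    using E unfolding eigsys_def by auto
  have L: "(\<lambda>N. L2norm PP (\<lambda>x. AA (e j) x - (\<Sum>i<N. lam i * ip PP (e j) (e i) * e i x))) \<longlonglongrightarrow> 0"
    using ls[OF es[of j]] unfolding L2_sums_def .
  have sumeq: "(\<Sum>i<n + Suc j. lam i * ip PP (e j) (e i) * e i x) = lam j * e j x" for n x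
  proof -
    have "(\<Sum>i<n + Suc j. lam i * ip PP (e j) (e i) * e i x) = (\<Sum>i<n + Suc j. if j = i then lam j * e j x else 0)"
      by (intro sum.cong refl) (simp add: orth)
    also have "\<dots> = lam j * e j x" by (simp add: sum.delta)
    finally show ?thesis .
  qed
  have "(\<lambda>n. L2norm PP (\<lambda>x. AA (e j) x - (\<Sum>i<n + Suc j. lam i * ip PP (e j) (e i) * e i x))) \<longlonglongrightarrow> 0"
    using LIMSEQ_ignore_initial_segment[OF L, of "Suc j"] by simp
  then have "(\<lambda>n. L2norm PP (\<lambda>x. AA (e j) x - lam j * e j x)) \<longlonglongrightarrow> 0"
    unfolding sumeq .
  then show ?thesis by (simp add: LIMSEQ_const_iff)
qed

lemma eig_ip:
  assumes E: "eigsys PP (\<lambda>f. AA f) e lam" and u: "sqint PP u"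
  shows "ip PP (AA (e j)) u = lam j * ip PP (e j) u"
proof -
  have es: "sqint PP (e j)" using E unfolding eigsys_def by auto
  have s1: "sqint PP (AA (e j))" by (rule A_sqint[OF es])
  have s2: "sqint PP (\<lambda>x. lam j * e j x)" by (rule sqint_cmult[OF es])
  have "\<bar>ip PP (\<lambda>x. AA (e j) x - lam j * e j x) u\<bar> \<le> L2norm PP (\<lambda>x. AA (e j) x - lam j * e j x) * L2norm PP u"
    by (rule cauchy_schwarz_ip[OF sqint_diff[OF s1 s2] u])
  also have "\<dots> = 0" by (simp add: eig_apply[OF E])
  finally have "ip PP (\<lambda>x. AA (e j) x - lam j * e j x) u = 0" by simp
  then show ?thesis using s1 s2 u by (simp add: ip_diff_left ip_cmult_left)
qed

lemma eig_T:
  assumes E: "eigsys PP (\<lambda>f. AA f) e lam" and u: "sqint PP u"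
  shows "ip QQ (Top PP k (e j)) (Top PP k u) = lam j * ip PP (e j) u"
proof -
  have es: "sqint PP (e j)" using E unfolding eigsys_def by auto
  have "ip QQ (Top PP k (e j)) (Top PP k u) = ip PP (AA (e j)) u"
    by (rule adj[OF u T_sqint[OF es], symmetric])
  then show ?thesis by (simp add: eig_ip[OF E u])
qed

lemma eig_lam_bound:
  assumes E: "eigsys PP (\<lambda>f. AA f) e lam" and c: "0 \<le> c" "norm_2inf QQ PP k \<le> ennreal c"
  shows "lam j \<le> c^2 * measure lebesgue PP"
proof -
  have es: "sqint PP (e j)" and n1: "ip PP (e j) (e j) = 1" using E unfolding eigsys_def by auto
  have l1: "L2norm PP (e j) = 1" using n1 by (simp add: L2norm_eq_sqrt)
  have "lam j = ip QQ (Top PP k (e j)) (Top PP k (e j))" using eig_T[OF E es, of j] n1 by simp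
  also have "\<dots> = (L2norm QQ (Top PP k (e j)))^2" by (simp add: L2norm_sq)
  also have "\<dots> \<le> (c * sqrt (measure lebesgue PP) * L2norm PP (e j))^2"
    by (intro power_mono T_norm[OF c(2) c(1) es]) (simp add: L2norm_nonneg)
  also have "\<dots> = c^2 * measure lebesgue PP" by (simp add: l1 power_mult_distrib)
  finally show ?thesis .
qed

end

context kctx begin

lemma finite_sum_bound:
  assumes E: "eigsys PP (\<lambda>f. AA f) e lam" and c: "0 \<le> c" "norm_2inf QQ PP k \<le> ennreal c"
    and \<beta>: "0 < \<beta>" and \<psi>: "sqint QQ \<psi>" and u: "sqint PP u"
  shows "\<bar>\<Sum>j<N. lam j powr \<beta> * ip QQ \<psi> (Top PP k (e j)) * ip PP (e j) u\<bar>
     \<le> (c^2 * measure lebesgue PP) powr \<beta> * L2norm QQ \<psi> * L2norm QQ (Top PP k u)"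
proof -
  let ?\<Lambda> = "c^2 * measure lebesgue PP"
  have es: "\<And>j. sqint PP (e j)" and lam0: "\<And>j. 0 \<le> lam j" using E unfolding eigsys_def by auto
  define J where "J = {j \<in> {..<N}. 0 < lam j}"
  have J: "finite J" "J \<subseteq> {..<N}" by (auto simp: J_def)
  define a where "a = (\<lambda>j. ip QQ \<psi> (Top PP k (e j)))"
  define bb where "bb = (\<lambda>j. ip QQ (Top PP k u) (Top PP k (e j)))"
  have tu: "sqint QQ (Top PP k u)" by (rule T_sqint[OF u])
  have tej: "\<And>j. sqint QQ (Top PP k (e j))" by (rule T_sqint[OF es])
  have orth: "ip QQ (Top PP k (e i)) (Top PP k (e j)) = (if i = j then lam j else 0)" for i j
    using eig_T[OF E es, of i j] E unfolding eigsys_def by auto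
  have ipu: "ip PP (e j) u = bb j / lam j" if "j \<in> J" for j
  proof -
    have "bb j = lam j * ip PP (e j) u" unfolding bb_def using eig_T[OF E u, of j] by (simp add: ip_comm)
    then show ?thesis using that by (simp add: J_def)
  qed
  have "(\<Sum>j<N. lam j powr \<beta> * ip QQ \<psi> (Top PP k (e j)) * ip PP (e j) u)
      = (\<Sum>j\<in>J. lam j powr \<beta> * ip QQ \<psi> (Top PP k (e j)) * ip PP (e j) u)"
  proof (rule sum.mono_neutral_right)
    show "finite {..<N}" by simp
    show "J \<subseteq> {..<N}" by (rule J(2))
    show "\<forall>i\<in>{..<N} - J. lam i powr \<beta> * ip QQ \<psi> (Top PP k (e i)) * ip PP (e i) u = 0"
    proof
      fix i assume "i \<in> {..<N} - J"
      then have "lam i = 0" using lam0[of i] by (auto simp: J_def)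
      then show "lam i powr \<beta> * ip QQ \<psi> (Top PP k (e i)) * ip PP (e i) u = 0" by simp
    qed
  qed
  also have "\<dots> = (\<Sum>j\<in>J. lam j powr \<beta> * (a j * bb j / lam j))"
    by (intro sum.cong refl) (simp add: ipu a_def)
  finally have eq: "(\<Sum>j<N. lam j powr \<beta> * ip QQ \<psi> (Top PP k (e j)) * ip PP (e j) u)
      = (\<Sum>j\<in>J. lam j powr \<beta> * (a j * bb j / lam j))" .
  have "\<bar>\<Sum>j\<in>J. lam j powr \<beta> * (a j * bb j / lam j)\<bar> \<le> (\<Sum>j\<in>J. \<bar>lam j powr \<beta> * (a j * bb j / lam j)\<bar>)"
    by (rule sum_abs)
  also have "\<dots> \<le> (\<Sum>j\<in>J. ?\<Lambda> powr \<beta> * ((\<bar>a j\<bar> / sqrt (lam j)) * (\<bar>bb j\<bar> / sqrt (lam j))))"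
  proof (rule sum_mono)
    fix j assume j: "j \<in> J"
    have lp: "0 < lam j" using j by (simp add: J_def)
    have "lam j powr \<beta> \<le> ?\<Lambda> powr \<beta>"
      by (rule powr_mono2) (use \<beta> lam0 eig_lam_bound[OF E c] in auto)
    moreover have "\<bar>a j * bb j / lam j\<bar> = (\<bar>a j\<bar> / sqrt (lam j)) * (\<bar>bb j\<bar> / sqrt (lam j))"
      using lp by (simp add: abs_mult field_simps)
    moreover have "\<bar>lam j powr \<beta> * (a j * bb j / lam j)\<bar> = lam j powr \<beta> * \<bar>a j * bb j / lam j\<bar>"
      by (simp add: abs_mult)
    moreover have "0 \<le> \<bar>a j * bb j / lam j\<bar>" by simp
    ultimately show "\<bar>lam j powr \<beta> * (a j * bb j / lam j)\<bar> \<le> ?\<Lambda> powr \<beta> * ((\<bar>a j\<bar> / sqrt (lam j)) * (\<bar>bb j\<bar> / sqrt (lam j)))"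
      by (metis mult_right_mono)
  qed
  also have "\<dots> = ?\<Lambda> powr \<beta> * (\<Sum>j\<in>J. (\<bar>a j\<bar> / sqrt (lam j)) * (\<bar>bb j\<bar> / sqrt (lam j)))"
    by (simp add: sum_distrib_left)
  also have "\<dots> \<le> ?\<Lambda> powr \<beta> * (L2norm QQ \<psi> * L2norm QQ (Top PP k u))"
  proof (rule mult_left_mono)
    show "0 \<le> ?\<Lambda> powr \<beta>" by simp
    have bes: "(\<Sum>j\<in>J. (ip QQ v (Top PP k (e j)))^2 / lam j) \<le> ip QQ v v" if v: "sqint QQ v" for v
      by (rule bessel_gen[OF J(1) tej _ _ v]) (auto simp: J_def orth)
    have sq: "(\<Sum>j\<in>J. (\<bar>f j\<bar> / sqrt (lam j))^2) = (\<Sum>j\<in>J. (f j)^2 / lam j)" for f :: "nat \<Rightarrow> real"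
      by (intro sum.cong refl) (auto simp: J_def power_divide)
    let ?x = "\<lambda>j. \<bar>a j\<bar> / sqrt (lam j)" and ?y = "\<lambda>j. \<bar>bb j\<bar> / sqrt (lam j)"
    have "(\<Sum>j\<in>J. ?x j * ?y j)^2 \<le> (\<Sum>j\<in>J. (?x j)^2) * (\<Sum>j\<in>J. (?y j)^2)"
      by (rule Cauchy_Schwarz_ineq_sum)
    also have "\<dots> \<le> ip QQ \<psi> \<psi> * ip QQ (Top PP k u) (Top PP k u)"
      unfolding sq a_def bb_def
      by (intro mult_mono bes \<psi> tu sum_nonneg) (auto simp: J_def ip_self_nonneg)
    also have "\<dots> = (L2norm QQ \<psi> * L2norm QQ (Top PP k u))^2"
      by (simp add: L2norm_sq power_mult_distrib)
    finally have "(\<Sum>j\<in>J. ?x j * ?y j)^2 \<le> (L2norm QQ \<psi> * L2norm QQ (Top PP k u))^2" .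
    then show "(\<Sum>j\<in>J. ?x j * ?y j) \<le> L2norm QQ \<psi> * L2norm QQ (Top PP k u)"
      by (rule power2_le_imp_le) (simp add: L2norm_nonneg)
  qed
  finally show ?thesis unfolding eq by (simp add: mult_ac)
qed

lemma source_bound:
  assumes c: "0 \<le> c" "norm_2inf QQ PP k \<le> ennreal c" and \<beta>: "0 < \<beta>" and \<psi>: "sqint QQ \<psi>"
    and pw: "is_power_image PP (\<lambda>f. AA f) \<beta> (Tadj QQ k \<psi>) \<phi>" and \<phi>: "sqint PP \<phi>" and u: "sqint PP u"
  shows "\<bar>ip PP \<phi> u\<bar> \<le> (c^2 * measure lebesgue PP) powr \<beta> * L2norm QQ \<psi> * L2norm QQ (Top PP k u)"
proof -
  let ?K = "(c^2 * measure lebesgue PP) powr \<beta> * L2norm QQ \<psi> * L2norm QQ (Top PP k u)"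
  obtain e lam where E: "eigsys PP (\<lambda>f. AA f) e lam"
    and Ls: "L2_sums PP (\<lambda>j. lam j powr \<beta> * ip PP (Tadj QQ k \<psi>) (e j)) e \<phi>"
    using pw unfolding is_power_image_def by blast
  have es: "\<And>j. sqint PP (e j)" using E unfolding eigsys_def by auto
  define co where "co = (\<lambda>j. lam j powr \<beta> * ip PP (Tadj QQ k \<psi>) (e j))"
  have co: "co j = lam j powr \<beta> * ip QQ \<psi> (Top PP k (e j))" for j
    unfolding co_def by (simp add: adj[OF es \<psi>])
  define S where "S = (\<lambda>N x. \<Sum>j<N. co j * e j x)"
  have Ss: "sqint PP (S N)" for N unfolding S_def by (intro sqint_sum sqint_cmult es) simp
  have ipS: "ip PP (S N) u = (\<Sum>j<N. co j * ip PP (e j) u)" for N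
  proof -
    have "ip PP (S N) u = (\<Sum>j<N. ip PP (\<lambda>x. co j * e j x) u)"
      unfolding S_def by (rule ip_sum_left) (simp_all add: sqint_cmult es u)
    then show ?thesis by (simp add: ip_cmult_left)
  qed
  have L: "(\<lambda>N. L2norm PP (\<lambda>x. \<phi> x - S N x)) \<longlonglongrightarrow> 0"
    using Ls unfolding L2_sums_def S_def co_def .
  have "(\<lambda>N. ip PP \<phi> u - ip PP (S N) u) \<longlonglongrightarrow> 0"
  proof (rule Lim_null_comparison)
    show "\<forall>\<^sub>F N in sequentially. norm (ip PP \<phi> u - ip PP (S N) u) \<le> L2norm PP (\<lambda>x. \<phi> x - S N x) * L2norm PP u"
    proof (intro always_eventually allI)
      fix N
      have "ip PP \<phi> u - ip PP (S N) u = ip PP (\<lambda>x. \<phi> x - S N x) u" by (simp add: ip_diff_left \<phi> Ss u)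
      then show "norm (ip PP \<phi> u - ip PP (S N) u) \<le> L2norm PP (\<lambda>x. \<phi> x - S N x) * L2norm PP u"
        using cauchy_schwarz_ip[OF sqint_diff[OF \<phi> Ss] u] by simp
    qed
    show "(\<lambda>N. L2norm PP (\<lambda>x. \<phi> x - S N x) * L2norm PP u) \<longlonglongrightarrow> 0"
      using tendsto_mult_left_zero[OF L] by simp
  qed
  then have "(\<lambda>N. ip PP \<phi> u - (ip PP \<phi> u - ip PP (S N) u)) \<longlonglongrightarrow> ip PP \<phi> u - 0"
    by (intro tendsto_intros)
  then have "(\<lambda>N. ip PP (S N) u) \<longlonglongrightarrow> ip PP \<phi> u" by simp
  then have lim: "(\<lambda>N. \<bar>ip PP (S N) u\<bar>) \<longlonglongrightarrow> \<bar>ip PP \<phi> u\<bar>" by (rule tendsto_rabs)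
  have bnd: "\<bar>ip PP (S N) u\<bar> \<le> ?K" for N
  proof -
    have "ip PP (S N) u = (\<Sum>j<N. lam j powr \<beta> * ip QQ \<psi> (Top PP k (e j)) * ip PP (e j) u)"
      by (simp add: ipS co)
    then show ?thesis using finite_sum_bound[OF E c \<beta> \<psi> u, of N] by simp
  qed
  show ?thesis by (rule LIMSEQ_le_const2[OF lim]) (use bnd in auto)
qed

end

lemma quad_ineq:
  fixes \<alpha> a b X Y :: real
  assumes \<alpha>: "0 < \<alpha>" and ab: "0 \<le> a" "0 \<le> b" and XY: "0 \<le> X" "0 \<le> Y"
    and q: "\<alpha> * Y^2 + X^2 \<le> a * X + b * Y"
  shows "X \<le> a + b / sqrt \<alpha>"
proof -
  define s where "s = b / sqrt \<alpha>"
  have s: "0 \<le> s" using ab \<alpha> by (simp add: s_def)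
  have sa: "sqrt \<alpha> * sqrt \<alpha> = \<alpha>" using \<alpha> by simp
  have "0 \<le> (sqrt \<alpha> * Y - s / 2)^2" by simp
  also have "(sqrt \<alpha> * Y - s / 2)^2 = \<alpha> * Y^2 - b * Y + s^2 / 4"
  proof -
    have sb: "sqrt \<alpha> * s = b" using \<alpha> by (simp add: s_def)
    have e1: "(sqrt \<alpha> * Y)^2 = \<alpha> * Y^2" using \<alpha> by (simp add: power_mult_distrib)
    have e2: "2 * (sqrt \<alpha> * Y) * (s / 2) = b * Y" using sb by (simp add: algebra_simps)
    have e3: "(s / 2)^2 = s^2 / 4" by (simp add: power_divide)
    show ?thesis unfolding power2_diff e1 e2 e3 by simp
  qed
  finally have "b * Y \<le> \<alpha> * Y^2 + s^2 / 4" by simp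
  moreover have "0 \<le> s^2" by simp
  ultimately have X2: "X^2 \<le> a * X + s^2" using q by linarith
  show ?thesis
  proof (rule ccontr)
    assume "\<not> X \<le> a + b / sqrt \<alpha>"
    then have Xg: "X > a + s" by (simp add: s_def)
    have "X * X > X * (a + s)" using Xg XY ab s by (intro mult_strict_left_mono) auto
    then have h1: "X * X > X * a + X * s" by (simp add: distrib_left)
    have "X * s \<ge> (a + s) * s" using Xg s by (intro mult_right_mono) auto
    then have h2: "X * s \<ge> a * s + s * s" by (simp add: distrib_right)
    have h3: "a * s \<ge> 0" using ab s by simp
    have "X * X > X * a + s * s" using h1 h2 h3 by linarith
    then have "X^2 > a * X + s^2" by (simp add: power2_eq_square mult.commute)
    with X2 show False by simp
  qed
qed

lemma g_norms:
  fixes \<alpha> X Y P K F :: real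
  assumes \<alpha>: "0 < \<alpha>" and XY: "0 \<le> X" "0 \<le> Y" and q: "\<alpha> * Y^2 + X^2 = \<alpha> * P"
    and P1: "\<bar>P\<bar> \<le> K * X" and P2: "\<bar>P\<bar> \<le> F * Y" and F: "0 \<le> F" and K: "0 \<le> K"
  shows "X \<le> \<alpha> * K" "Y \<le> sqrt \<alpha> * K" "X \<le> sqrt \<alpha> * F"
proof -
  have aP: "\<alpha> * P \<le> \<alpha> * (K * X)" using P1 \<alpha> by (intro mult_left_mono) auto
  have aP2: "\<alpha> * P \<le> \<alpha> * (F * Y)" using P2 \<alpha> by (intro mult_left_mono) auto
  have "0 \<le> \<alpha> * Y^2" using \<alpha> by simp
  then have "X * X \<le> X * (\<alpha> * K)" using q aP by (simp add: power2_eq_square algebra_simps)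
  then show X: "X \<le> \<alpha> * K"
    using XY K \<alpha> by (cases "X = 0") (auto simp: mult_le_cancel_left_pos)
  have "\<alpha> * Y^2 \<le> \<alpha> * (K * X)" using q aP zero_le_power2[of X] by linarith
  also have "\<dots> \<le> \<alpha> * (K * (\<alpha> * K))" using X K \<alpha> by (intro mult_left_mono) auto
  finally have "Y^2 \<le> \<alpha> * K^2" using \<alpha> by (simp add: power2_eq_square mult_ac)
  then have "sqrt (Y^2) \<le> sqrt (\<alpha> * K^2)" by (rule real_sqrt_le_mono)
  then show "Y \<le> sqrt \<alpha> * K" using XY K by (simp add: real_sqrt_mult)
  have "\<alpha> * Y^2 \<le> \<alpha> * (F * Y)" using q aP2 zero_le_power2[of X] by linarith
  then have "\<alpha> * (Y * Y) \<le> \<alpha> * (Y * F)" by (simp add: power2_eq_square mult_ac)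
  then have "Y * Y \<le> Y * F" using \<alpha> by simp
  then have YF: "Y \<le> F" using XY F by (cases "Y = 0") (auto simp: mult_le_cancel_left_pos)
  have "0 \<le> \<alpha> * Y^2" using \<alpha> by simp
  then have "X^2 \<le> \<alpha> * (F * Y)" using q aP2 by linarith
  also have "\<dots> \<le> \<alpha> * (F * F)" using YF F \<alpha> by (intro mult_left_mono) auto
  finally have "sqrt (X^2) \<le> sqrt (\<alpha> * F^2)" by (intro real_sqrt_le_mono) (simp add: power2_eq_square)
  then show "X \<le> sqrt \<alpha> * F" using XY F by (simp add: real_sqrt_mult)
qed

lemma cont_kernel_diff:
  "cont_kernel Q P kh \<Longrightarrow> cont_kernel Q P k \<Longrightarrow> cont_kernel Q P (\<lambda>w z. kh w z - k w z)"
  unfolding cont_kernel_def by (simp add: case_prod_beta continuous_on_diff)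

lemma Top_kdiff:
  fixes k kh :: "real^'q \<Rightarrow> real^'p \<Rightarrow> real"
  assumes "kctx a b k" "kctx a b kh" "sqint (cube a b) u" "w \<in> cube a b"
  shows "Top (cube a b) (\<lambda>w z. kh w z - k w z) u w = Top (cube a b) kh u w - Top (cube a b) k u w"
  using kctx.T_int[OF assms(1) assms(3,4)] kctx.T_int[OF assms(2) assms(3,4)]
  unfolding Top_def by (simp add: left_diff_distrib)

lemma Tadj_kdiff:
  fixes k kh :: "real^'q \<Rightarrow> real^'p \<Rightarrow> real"
  assumes "kctx a b k" "kctx a b kh" "sqint (cube a b) v" "z \<in> cube a b"
  shows "Tadj (cube a b) (\<lambda>w z. kh w z - k w z) v z = Tadj (cube a b) kh v z - Tadj (cube a b) k v z"
  using kctx.Ts_int[OF assms(1) assms(3,4)] kctx.Ts_int[OF assms(2) assms(3,4)]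
  unfolding Tadj_def by (simp add: left_diff_distrib)

lemma det_bound:
  fixes a b :: real and k kh :: "real^'q \<Rightarrow> real^'p \<Rightarrow> real" and \<phi> :: "real^'p \<Rightarrow> real"
  assumes ab: "a < b" and kc: "cont_kernel (cube a b) (cube a b) k" and khc: "cont_kernel (cube a b) (cube a b) kh"
    and \<alpha>: "0 < \<alpha>"
    and \<phi>c: "continuous_on (cube a b) \<phi>" and \<phi>L: "\<forall>z\<in>cube a b. \<bar>\<phi> z\<bar> \<le> L"
    and C: "0 \<le> C" and kN: "norm_2inf (cube a b) (cube a b) k \<le> ennreal C"
    and K\<phi>: "0 \<le> K\<phi>"
    and src: "\<forall>u. sqint (cube a b) u \<longrightarrow> \<bar>ip (cube a b) \<phi> u\<bar> \<le> K\<phi> * L2norm (cube a b) (Top (cube a b) k u)"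
    and \<delta>: "0 \<le> \<delta>" and dN: "norm_2inf (cube a b) (cube a b) (\<lambda>w z. kh w z - k w z) \<le> ennreal \<delta>"
    and z: "z \<in> cube a b"
  shows "\<bar>reg_proj (cube a b) (cube a b) kh \<alpha> \<phi> z - reg_proj (cube a b) (cube a b) k \<alpha> \<phi> z\<bar>
     \<le> (3 * sqrt (measure lebesgue (cube a b :: (real^'p) set)) * K\<phi> * ((C + \<delta>) * \<delta>)
         + sqrt (measure lebesgue (cube a b :: (real^'p) set)) * L * \<delta>) / sqrt \<alpha>"
proof -
  define kd where "kd = (\<lambda>w z. kh w z - k w z)"
  interpret K: kctx a b k by unfold_locales (rule ab, rule kc)
  interpret H: kctx a b kh by unfold_locales (rule ab, rule khc)
  interpret D: kctx a b kd by unfold_locales (rule ab, simp add: kd_def cont_kernel_diff[OF khc kc])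
  let ?V = "measure lebesgue (cube a b :: (real^'p) set)"
  let ?PP = "cube a b :: (real^'p) set" and ?QQ = "cube a b :: (real^'q) set"
  define sV where "sV = sqrt ?V"
  have sV: "0 \<le> sV" by (simp add: sV_def)
  have L0: "0 \<le> L" using \<phi>L z by (meson abs_ge_zero order_trans)
  have \<phi>s: "sqint ?PP \<phi>" by (rule continuous_sqint[OF K.PPc \<phi>c])
  define p where "p = reg_proj ?PP ?QQ k \<alpha> \<phi>"
  define ph where "ph = reg_proj ?PP ?QQ kh \<alpha> \<phi>"
  have pc: "continuous_on ?PP p" and peq: "\<forall>x\<in>?PP. \<alpha> * p x + K.AA p x = K.AA \<phi> x"
    using K.reg_proj_char[OF \<alpha> \<phi>c] unfolding p_def by auto
  have phc: "continuous_on ?PP ph" and pheq: "\<forall>x\<in>?PP. \<alpha> * ph x + H.AA ph x = H.AA \<phi> x"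
    using H.reg_proj_char[OF \<alpha> \<phi>c] unfolding ph_def by auto
  define g where "g = (\<lambda>x. \<phi> x - p x)"
  define gh where "gh = (\<lambda>x. \<phi> x - ph x)"
  define ee where "ee = (\<lambda>x. ph x - p x)"
  have ps: "sqint ?PP p" and phs: "sqint ?PP ph" using pc phc by (auto intro: continuous_sqint[OF K.PPc])
  have gs: "sqint ?PP g" and ghs: "sqint ?PP gh" and es: "sqint ?PP ee"
    unfolding g_def gh_def ee_def using \<phi>s ps phs by (auto intro: sqint_diff)
  have geq: "\<alpha> * g x + K.AA g x = \<alpha> * \<phi> x" if x: "x \<in> ?PP" for x
    using K.A_diff[OF \<phi>s ps x] peq x unfolding g_def right_diff_distrib by auto
  have gheq: "\<alpha> * gh x + H.AA gh x = \<alpha> * \<phi> x" if x: "x \<in> ?PP" for x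
    using H.A_diff[OF \<phi>s phs x] pheq x unfolding gh_def right_diff_distrib by auto
  have eeq: "\<alpha> * ee x + H.AA ee x = H.AA g x - K.AA g x" if x: "x \<in> ?PP" for x
  proof -
    have "H.AA ee x = H.AA (\<lambda>x. g x - gh x) x" by (rule H.A_cong) (simp add: ee_def g_def gh_def)
    also have "\<dots> = H.AA g x - H.AA gh x" by (rule H.A_diff[OF gs ghs x])
    finally have "H.AA ee x = H.AA g x - H.AA gh x" .
    moreover have "ee x = g x - gh x" by (simp add: ee_def g_def gh_def)
    then have "\<alpha> * ee x = \<alpha> * g x - \<alpha> * gh x" by (simp add: right_diff_distrib)
    ultimately show ?thesis using geq[OF x] gheq[OF x] by linarith
  qed
  define X where "X = L2norm ?QQ (Top ?PP k g)"
  define Y where "Y = L2norm ?PP g"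
  define F where "F = sV * L"
  have F: "0 \<le> F" using sV L0 by (simp add: F_def)
  have XY: "0 \<le> X" "0 \<le> Y" by (simp_all add: X_def Y_def L2norm_nonneg)
  have qg: "\<alpha> * Y^2 + X^2 = \<alpha> * ip ?PP \<phi> g"
  proof -
    have "ip ?PP (\<lambda>x. \<alpha> * g x + K.AA g x) g = ip ?PP (\<lambda>x. \<alpha> * \<phi> x) g"
      by (rule ip_cong) (simp_all add: geq)
    moreover have "ip ?PP (\<lambda>x. \<alpha> * g x + K.AA g x) g = \<alpha> * Y^2 + X^2"
      using gs K.A_sqint[OF gs]
      by (simp add: ip_add_left sqint_cmult ip_cmult_left K.quad[OF gs] X_def Y_def L2norm_sq)
    ultimately show ?thesis by (simp add: ip_cmult_left)
  qed
  have P1: "\<bar>ip ?PP \<phi> g\<bar> \<le> K\<phi> * X" using src gs by (simp add: X_def)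
  have P2: "\<bar>ip ?PP \<phi> g\<bar> \<le> F * Y"
  proof -
    have "\<bar>ip ?PP \<phi> g\<bar> \<le> L2norm ?PP \<phi> * Y" unfolding Y_def by (rule cauchy_schwarz_ip[OF \<phi>s gs])
    also have "\<dots> \<le> F * Y"
      using L2norm_le_sup[OF K.PPc \<phi>s, of L] \<phi>L XY by (intro mult_right_mono) (auto simp: F_def sV_def)
    finally show ?thesis .
  qed
  have X1: "X \<le> \<alpha> * K\<phi>" and Y1: "Y \<le> sqrt \<alpha> * K\<phi>" and X2: "X \<le> sqrt \<alpha> * F"
    using g_norms[OF \<alpha> XY qg P1 P2 F K\<phi>] by auto
  have dN': "norm_2inf ?QQ ?PP kd \<le> ennreal \<delta>" using dN by (simp add: kd_def)
  have kk: "kctx a b k" "kctx a b kh" by unfold_locales (simp_all add: ab kc khc)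
  have Tsplit: "Top ?PP kh u w = Top ?PP k u w + Top ?PP kd u w" if "sqint ?PP u" "w \<in> ?QQ" for u w
    using Top_kdiff[OF kk that] by (simp add: kd_def)
  have Tsplit': "Tadj ?QQ kh v x = Tadj ?QQ k v x + Tadj ?QQ kd v x" if "sqint ?QQ v" "x \<in> ?PP" for v x
    using Tadj_kdiff[OF kk that] by (simp add: kd_def)
  define Xe where "Xe = L2norm ?QQ (Top ?PP kh ee)"
  define Ye where "Ye = L2norm ?PP ee"
  have XYe: "0 \<le> Xe" "0 \<le> Ye" by (simp_all add: Xe_def Ye_def L2norm_nonneg)
  have qe: "\<alpha> * Ye^2 + Xe^2 = ip ?QQ (Top ?PP kd g) (Top ?PP kh ee) + ip ?QQ (Top ?PP k g) (Top ?PP kd ee)"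
  proof -
    have "ip ?PP (\<lambda>x. \<alpha> * ee x + H.AA ee x) ee = ip ?PP (\<lambda>x. H.AA g x - K.AA g x) ee"
      by (rule ip_cong) (simp_all add: eeq)
    moreover have "ip ?PP (\<lambda>x. \<alpha> * ee x + H.AA ee x) ee = \<alpha> * Ye^2 + Xe^2"
      using es H.A_sqint[OF es]
      by (simp add: ip_add_left sqint_cmult ip_cmult_left H.quad[OF es] Xe_def Ye_def L2norm_sq)
    moreover have "ip ?PP (\<lambda>x. H.AA g x - K.AA g x) ee
        = ip ?QQ (Top ?PP kh g) (Top ?PP kh ee) - ip ?QQ (Top ?PP k g) (Top ?PP k ee)"
      using ip_diff_left[OF H.A_sqint[OF gs] K.A_sqint[OF gs] es] H.adj[OF es H.T_sqint[OF gs]]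
        K.adj[OF es K.T_sqint[OF gs]] by simp
    moreover have "ip ?QQ (Top ?PP kh g) (Top ?PP kh ee)
        = ip ?QQ (Top ?PP k g) (Top ?PP kh ee) + ip ?QQ (Top ?PP kd g) (Top ?PP kh ee)"
    proof -
      have "ip ?QQ (Top ?PP kh g) (Top ?PP kh ee) = ip ?QQ (\<lambda>w. Top ?PP k g w + Top ?PP kd g w) (Top ?PP kh ee)"
        by (rule ip_cong) (simp_all add: Tsplit gs)
      then show ?thesis by (simp add: ip_add_left K.T_sqint D.T_sqint H.T_sqint gs es)
    qed
    moreover have "ip ?QQ (Top ?PP k g) (Top ?PP kh ee) - ip ?QQ (Top ?PP k g) (Top ?PP k ee)
        = ip ?QQ (Top ?PP k g) (Top ?PP kd ee)"
    proof -
      have "ip ?QQ (Top ?PP k g) (Top ?PP kd ee) = ip ?QQ (Top ?PP k g) (\<lambda>w. Top ?PP kh ee w - Top ?PP k ee w)"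
        by (rule ip_cong) (simp_all add: Tsplit es)
      then show ?thesis by (simp add: ip_diff_right K.T_sqint H.T_sqint gs es)
    qed
    ultimately show ?thesis by linarith
  qed
  have Tdg: "L2norm ?QQ (Top ?PP kd g) \<le> \<delta> * sV * Y"
    using D.T_norm[OF dN' \<delta> gs] by (simp add: sV_def Y_def)
  have Tde: "L2norm ?QQ (Top ?PP kd ee) \<le> \<delta> * sV * Ye"
    using D.T_norm[OF dN' \<delta> es] by (simp add: sV_def Ye_def)
  have qe2: "\<alpha> * Ye^2 + Xe^2 \<le> (\<delta> * sV * Y) * Xe + (\<delta> * sV * X) * Ye"
  proof -
    have "ip ?QQ (Top ?PP kd g) (Top ?PP kh ee) \<le> L2norm ?QQ (Top ?PP kd g) * Xe"
      using cauchy_schwarz_ip[OF D.T_sqint[OF gs] H.T_sqint[OF es]] by (simp add: Xe_def)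
    also have "\<dots> \<le> (\<delta> * sV * Y) * Xe" using Tdg XYe by (intro mult_right_mono) auto
    finally have 1: "ip ?QQ (Top ?PP kd g) (Top ?PP kh ee) \<le> (\<delta> * sV * Y) * Xe" .
    have "ip ?QQ (Top ?PP k g) (Top ?PP kd ee) \<le> X * L2norm ?QQ (Top ?PP kd ee)"
      using cauchy_schwarz_ip[OF K.T_sqint[OF gs] D.T_sqint[OF es]] by (simp add: X_def)
    also have "\<dots> \<le> X * (\<delta> * sV * Ye)" using Tde XY by (intro mult_left_mono) auto
    finally have 2: "ip ?QQ (Top ?PP k g) (Top ?PP kd ee) \<le> (\<delta> * sV * X) * Ye" by (simp add: mult_ac)
    show ?thesis using qe 1 2 by linarith
  qed
  have Xe1: "Xe \<le> \<delta> * sV * Y + \<delta> * sV * X / sqrt \<alpha>"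
    by (rule quad_ineq[OF \<alpha> _ _ XYe(1) XYe(2) qe2]) (use \<delta> sV XY in auto)
  have Tkh: "\<bar>Tadj ?QQ kh v z\<bar> \<le> (C + \<delta>) * L2norm ?QQ v" if v: "sqint ?QQ v" for v
  proof -
    have "\<bar>Tadj ?QQ k v z\<bar> \<le> C * L2norm ?QQ v" by (rule norm2inf_pt[OF kN C v z])
    moreover have "\<bar>Tadj ?QQ kd v z\<bar> \<le> \<delta> * L2norm ?QQ v" by (rule norm2inf_pt[OF dN' \<delta> v z])
    ultimately show ?thesis using Tsplit'[OF v z] by (simp add: distrib_right)
  qed
  have Agd: "H.AA g z - K.AA g z = Tadj ?QQ kd (Top ?PP k g) z + Tadj ?QQ kh (Top ?PP kd g) z"
  proof -
    have "H.AA g z = Tadj ?QQ kh (\<lambda>w. Top ?PP k g w + Top ?PP kd g w) z"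
      by (rule H.Ts_cong) (simp add: Tsplit gs)
    also have "\<dots> = Tadj ?QQ kh (Top ?PP k g) z + Tadj ?QQ kh (Top ?PP kd g) z"
      by (rule H.Ts_add[OF K.T_sqint[OF gs] D.T_sqint[OF gs] z])
    finally show ?thesis using Tsplit'[OF K.T_sqint[OF gs] z] by simp
  qed
  have b1: "\<bar>H.AA g z - K.AA g z\<bar> \<le> \<delta> * X + (C + \<delta>) * (\<delta> * sV * Y)"
  proof -
    have "\<bar>Tadj ?QQ kd (Top ?PP k g) z\<bar> \<le> \<delta> * X"
      using norm2inf_pt[OF dN' \<delta> K.T_sqint[OF gs] z] by (simp add: X_def)
    moreover have "\<bar>Tadj ?QQ kh (Top ?PP kd g) z\<bar> \<le> (C + \<delta>) * (\<delta> * sV * Y)"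
      using Tkh[OF D.T_sqint[OF gs]] Tdg C \<delta> by (smt (verit) mult_left_mono)
    ultimately show ?thesis unfolding Agd by linarith
  qed
  have b2: "\<bar>H.AA ee z\<bar> \<le> (C + \<delta>) * Xe" using Tkh[OF H.T_sqint[OF es]] by (simp add: Xe_def)
  have eez: "\<alpha> * ee z = (H.AA g z - K.AA g z) - H.AA ee z" using eeq[OF z] by simp
  have "\<alpha> * \<bar>ee z\<bar> \<le> \<delta> * X + (C + \<delta>) * (\<delta> * sV * Y) + (C + \<delta>) * Xe"
    using b1 b2 eez \<alpha> by (simp add: abs_mult[symmetric])
  also have "\<dots> \<le> \<delta> * X + (C + \<delta>) * (\<delta> * sV * Y) + (C + \<delta>) * (\<delta> * sV * Y + \<delta> * sV * X / sqrt \<alpha>)"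
    using Xe1 C \<delta> by (intro add_left_mono mult_left_mono) auto
  also have "\<dots> \<le> sqrt \<alpha> * (3 * sV * K\<phi> * ((C + \<delta>) * \<delta>) + sV * L * \<delta>)"
  proof -
    have sa: "0 < sqrt \<alpha>" using \<alpha> by simp
    have t1: "\<delta> * X \<le> sqrt \<alpha> * (sV * L * \<delta>)"
      using mult_left_mono[OF X2 \<delta>] by (simp add: F_def mult_ac)
    have cd: "0 \<le> (C + \<delta>) * \<delta> * sV" using C \<delta> sV by simp
    have t2: "(C + \<delta>) * (\<delta> * sV * Y) \<le> sqrt \<alpha> * (sV * K\<phi> * ((C + \<delta>) * \<delta>))"
      using mult_left_mono[OF Y1 cd] by (simp add: mult_ac)
    have "X / sqrt \<alpha> \<le> \<alpha> * K\<phi> / sqrt \<alpha>" using X1 sa by (simp add: divide_right_mono)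
    also have "\<alpha> * K\<phi> / sqrt \<alpha> = sqrt \<alpha> * K\<phi>"
      using \<alpha> by (metis less_imp_le nonzero_mult_div_cancel_left real_div_sqrt sa times_divide_eq_left mult.commute)
    finally have X3: "X / sqrt \<alpha> \<le> sqrt \<alpha> * K\<phi>" .
    have t3: "(C + \<delta>) * (\<delta> * sV * X / sqrt \<alpha>) \<le> sqrt \<alpha> * (sV * K\<phi> * ((C + \<delta>) * \<delta>))"
      using mult_left_mono[OF X3 cd] by (simp add: mult_ac)
    show ?thesis using t1 t2 t3 by (simp add: algebra_simps)
  qed
  finally have fin: "\<alpha> * \<bar>ee z\<bar> \<le> sqrt \<alpha> * (3 * sV * K\<phi> * ((C + \<delta>) * \<delta>) + sV * L * \<delta>)" .
  have "\<bar>ee z\<bar> \<le> (3 * sV * K\<phi> * ((C + \<delta>) * \<delta>) + sV * L * \<delta>) / sqrt \<alpha>"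
  proof -
    have sa: "0 < sqrt \<alpha>" using \<alpha> by simp
    have "sqrt \<alpha> * (sqrt \<alpha> * \<bar>ee z\<bar>) \<le> sqrt \<alpha> * (3 * sV * K\<phi> * ((C + \<delta>) * \<delta>) + sV * L * \<delta>)"
      using fin \<alpha> by (simp add: mult.assoc[symmetric])
    then have "sqrt \<alpha> * \<bar>ee z\<bar> \<le> 3 * sV * K\<phi> * ((C + \<delta>) * \<delta>) + sV * L * \<delta>"
      using sa by simp
    then show ?thesis using sa by (simp add: field_simps)
  qed
  then show ?thesis by (simp add: ee_def p_def ph_def sV_def)
qed

definition rr :: "real \<Rightarrow> real \<Rightarrow> real" where
  "rr c t = (sqrt (1 + 4 * max t 0 / c) - 1) / 2"

lemma rr_nonneg: "0 < c \<Longrightarrow> 0 \<le> rr c t"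
  unfolding rr_def by (simp add: zero_le_divide_iff)

lemma rr_eq: assumes c: "0 < c" shows "c * (rr c t + (rr c t)^2) = max t 0"
proof -
  define s where "s = sqrt (1 + 4 * max t 0 / c)"
  have s2: "s^2 = 1 + 4 * max t 0 / c" unfolding s_def using c by (simp add: zero_le_divide_iff)
  have "rr c t + (rr c t)^2 = (s^2 - 1) / 4" unfolding rr_def s_def[symmetric]
    by (simp add: power2_eq_square field_simps)
  also have "\<dots> = max t 0 / c" using s2 by simp
  finally show ?thesis using c by simp
qed

lemma rr_le: assumes c: "0 < c" and v: "0 \<le> v" and t: "t \<le> c * (v + v^2)" shows "rr c t \<le> v"
proof (rule ccontr)
  assume "\<not> rr c t \<le> v"
  then have lt: "v < rr c t" by simp
  have "v^2 < (rr c t)^2" using lt v by (intro power_strict_mono) auto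
  then have "v + v^2 < rr c t + (rr c t)^2" using lt by simp
  then have "c * (v + v^2) < c * (rr c t + (rr c t)^2)" using c by simp
  also have "\<dots> = max t 0" by (rule rr_eq[OF c])
  finally have "c * (v + v^2) < max t 0" .
  moreover have "0 \<le> c * (v + v^2)" using c v by simp
  ultimately show False using t by simp
qed

lemma enn_poly: "0 \<le> c \<Longrightarrow> 0 \<le> x \<Longrightarrow>
  ennreal c * (ennreal x + (ennreal x)^2) = ennreal (c * (x + x^2))"
  by (simp add: ennreal_mult ennreal_power ennreal_plus)

definition rho :: "real \<Rightarrow> ennreal \<Rightarrow> ennreal" where
  "rho c y = (if y = \<infinity> then \<infinity> else ennreal (rr c (enn2real y)))"

lemma rho_eq: assumes c: "0 < c" shows "ennreal c * (rho c y + (rho c y)^2) = y"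
proof (cases "y = \<infinity>")
  case True then show ?thesis using c by (simp add: rho_def ennreal_mult_top)
next
  case False
  then obtain t where t: "y = ennreal t" "0 \<le> t" by (cases y) auto
  have "ennreal c * (rho c y + (rho c y)^2) = ennreal (c * (rr c t + (rr c t)^2))"
    using c rr_nonneg[OF c, of t] t False
    by (simp add: rho_def enn_poly)
  also have "\<dots> = y" using rr_eq[OF c, of t] t by simp
  finally show ?thesis .
qed

lemma rho_le: assumes c: "0 < c" and y: "y \<le> ennreal c * (v + v^2)" shows "rho c y \<le> v"
proof (cases "v = \<infinity>")
  case True then show ?thesis by simp
next
  case False
  then obtain v' where v': "v = ennreal v'" "0 \<le> v'" by (cases v) auto
  have "y \<le> ennreal (c * (v' + v'^2))"
    using y v' c by (simp add: enn_poly)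
  moreover have X0: "0 \<le> c * (v' + v'^2)" using c v' by simp
  have "y < \<infinity>" using le_less_trans[OF \<open>y \<le> ennreal (c * (v' + v'^2))\<close> ennreal_less_top] by simp
  then have yfin: "y \<noteq> \<infinity>" by simp
  then obtain t where t1: "y = ennreal t" "0 \<le> t" by (cases y) auto
  have t: "y = ennreal t" "0 \<le> t" "t \<le> c * (v' + v'^2)"
    using t1 \<open>y \<le> ennreal (c * (v' + v'^2))\<close> X0 by (auto simp: ennreal_le_iff)
  have "rr c t \<le> v'" by (rule rr_le[OF c v'(2) t(3)])
  then show ?thesis using t v' by (simp add: rho_def)
qed

lemma nn_CS_prob:
  assumes P: "prob_space M" and u: "u \<in> borel_measurable M" and fin: "(\<integral>\<^sup>+x. (u x)^2 \<partial>M) < \<infinity>"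
  shows "(\<integral>\<^sup>+x. u x \<partial>M) \<le> ennreal (sqrt (enn2real (\<integral>\<^sup>+x. (u x)^2 \<partial>M)))"
proof -
  interpret prob_space M by (rule P)
  let ?E = "\<integral>\<^sup>+x. (u x)^2 \<partial>M"
  have "(\<integral>\<^sup>+x. u x * 1 \<partial>M)^2 \<le> ?E * (\<integral>\<^sup>+x. 1^2 \<partial>M)"
    by (rule Cauchy_Schwarz_nn_integral) (use u in auto)
  then have sq: "(\<integral>\<^sup>+x. u x \<partial>M)^2 \<le> ?E" by (simp add: emeasure_space_1)
  obtain e where e: "?E = ennreal e" "0 \<le> e" using fin by (cases ?E) auto
  then have "(\<integral>\<^sup>+x. u x \<partial>M)^2 < \<infinity>" using sq by (simp add: le_less_trans)
  then obtain t where t: "(\<integral>\<^sup>+x. u x \<partial>M) = ennreal t" "0 \<le> t"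
    by (cases "(\<integral>\<^sup>+x. u x \<partial>M)") (auto simp: ennreal_power)
  have "ennreal (t^2) \<le> ennreal e" using sq t e by (simp add: ennreal_power)
  then have "t^2 \<le> e" using e(2) by (simp add: ennreal_le_iff)
  then have "t \<le> sqrt e" using t(2) by (simp add: real_le_rsqrt)
  then show ?thesis using t e by simp
qed

lemma lower_int_bound:
  fixes f :: "'a \<Rightarrow> ennreal"
  assumes P: "prob_space M" and c: "0 \<le> c" and fin: "(\<integral>\<^sup>+x. (f x)^2 \<partial>M) < \<infinity>"
  shows "(\<integral>\<^sup>+x. ennreal c * (f x + (f x)^2) \<partial>M)
     \<le> ennreal c * (ennreal (sqrt (enn2real (\<integral>\<^sup>+x. (f x)^2 \<partial>M))) + (\<integral>\<^sup>+x. (f x)^2 \<partial>M))"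
proof (cases "c = 0")
  case True then show ?thesis by simp
next
  case False
  then have c: "0 < c" using c by simp
  let ?E = "\<integral>\<^sup>+x. (f x)^2 \<partial>M"
  show ?thesis
    unfolding nn_integral_def[of M "\<lambda>x. ennreal c * (f x + (f x)^2)"]
  proof (rule SUP_least)
    fix g assume "g \<in> {g. simple_function M g \<and> g \<le> (\<lambda>x. ennreal c * (f x + (f x)^2))}"
    then have gs: "simple_function M g" and gle: "\<And>x. g x \<le> ennreal c * (f x + (f x)^2)"
      by (auto simp: le_fun_def)
    define u where "u = (\<lambda>x. rho c (g x))"
    have us: "simple_function M u" using simple_function_compose[OF gs, of "rho c"] by (simp add: u_def o_def)
    have um: "u \<in> borel_measurable M" by (rule borel_measurable_simple_function[OF us])
    have uf: "u x \<le> f x" for x unfolding u_def by (rule rho_le[OF c gle])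
    have gu: "g x = ennreal c * (u x + (u x)^2)" for x unfolding u_def by (rule rho_eq[OF c, symmetric])
    have u2: "(\<integral>\<^sup>+x. (u x)^2 \<partial>M) \<le> ?E"
      by (intro nn_integral_mono power_mono uf) simp
    then have u2f: "(\<integral>\<^sup>+x. (u x)^2 \<partial>M) < \<infinity>" using fin by (simp add: le_less_trans)
    have "integral\<^sup>S M g = (\<integral>\<^sup>+x. g x \<partial>M)" by (rule nn_integral_eq_simple_integral[OF gs, symmetric])
    also have "\<dots> = (\<integral>\<^sup>+x. ennreal c * (u x + (u x)^2) \<partial>M)" by (simp add: gu)
    also have "\<dots> = ennreal c * ((\<integral>\<^sup>+x. u x \<partial>M) + (\<integral>\<^sup>+x. (u x)^2 \<partial>M))"
      using um by (simp add: nn_integral_cmult nn_integral_add)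
    also have "\<dots> \<le> ennreal c * (ennreal (sqrt (enn2real ?E)) + ?E)"
    proof (intro mult_left_mono add_mono u2)
      have "(\<integral>\<^sup>+x. u x \<partial>M) \<le> ennreal (sqrt (enn2real (\<integral>\<^sup>+x. (u x)^2 \<partial>M)))"
        by (rule nn_CS_prob[OF P um u2f])
      also have "\<dots> \<le> ennreal (sqrt (enn2real ?E))"
        using u2 fin by (intro ennreal_leI real_sqrt_le_mono enn2real_mono) auto
      finally show "(\<integral>\<^sup>+x. u x \<partial>M) \<le> ennreal (sqrt (enn2real ?E))" .
    qed simp
    finally show "integral\<^sup>S M g \<le> ennreal c * (ennreal (sqrt (enn2real ?E)) + ?E)" .
  qed
qed

lemma cube_measure_pos:
  assumes "a < b" shows "0 < measure lebesgue (cube a b :: (real^'n) set)"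
proof -
  have "((\<chi> i. a)::real^'n) \<in> cbox ((\<chi> i. a)::real^'n) (\<chi> i. b)"
    using assms by (simp add: mem_box_cart)
  then have ne: "cbox ((\<chi> i. a)::real^'n) (\<chi> i. b) \<noteq> {}" by blast
  have "measure lebesgue (cube a b :: (real^'n) set) = Henstock_Kurzweil_Integration.content (cbox ((\<chi> i. a)::real^'n) (\<chi> i. b))"
    by (simp add: cube_cbox measure_completion)
  also have "\<dots> = (\<Prod>i\<in>(UNIV::'n set). b - a)" using content_cbox_cart[OF ne] by simp
  also have "\<dots> > 0" using assms by (intro prod_pos) auto
  finally show ?thesis .
qed

lemma final_arith:
  fixes K0 \<alpha> e B :: real
  assumes K0: "0 \<le> K0" and \<alpha>: "0 < \<alpha>" and e: "0 \<le> e" "e \<le> B"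
  shows "ennreal (K0 / sqrt \<alpha>) * (ennreal (sqrt e) + ennreal e)
     \<le> ennreal (K0 * (1 + sqrt B)) * ennreal (sqrt (e / \<alpha>))"
proof -
  have B: "0 \<le> B" using e by simp
  have "e = sqrt e * sqrt e" using e by simp
  also have "\<dots> \<le> sqrt B * sqrt e" using e by (intro mult_right_mono real_sqrt_le_mono) auto
  finally have eb: "e \<le> sqrt B * sqrt e" .
  have "ennreal (K0 / sqrt \<alpha>) * (ennreal (sqrt e) + ennreal e) = ennreal (K0 / sqrt \<alpha> * (sqrt e + e))"
  proof -
    have X0: "0 \<le> K0 / sqrt \<alpha>" using K0 \<alpha> by simp
    have Y0: "0 \<le> sqrt e + e" using e by simp
    show ?thesis using ennreal_mult[OF X0 Y0] ennreal_plus[of "sqrt e" e] e by simp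
  qed
  also have "\<dots> \<le> ennreal (K0 / sqrt \<alpha> * (sqrt e + sqrt B * sqrt e))"
    using K0 \<alpha> eb by (intro ennreal_leI mult_left_mono add_left_mono) auto
  also have "K0 / sqrt \<alpha> * (sqrt e + sqrt B * sqrt e) = K0 * (1 + sqrt B) * sqrt (e / \<alpha>)"
    using \<alpha> by (simp add: real_sqrt_divide field_simps)
  also have "ennreal (K0 * (1 + sqrt B) * sqrt (e / \<alpha>)) = ennreal (K0 * (1 + sqrt B)) * ennreal (sqrt (e / \<alpha>))"
    using K0 B \<alpha> e by (simp add: ennreal_mult)
  finally show ?thesis .
qed

theorem lemma2:
  fixes a b t L \<beta> C :: real
    and \<alpha> :: "nat \<Rightarrow> real"
    and M :: "nat \<Rightarrow> (real^'p \<Rightarrow> real) \<Rightarrow> (real^'q \<Rightarrow> real^'p \<Rightarrow> real) \<Rightarrow> 'w measure"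
    and Kh :: "nat \<Rightarrow> (real^'p \<Rightarrow> real) \<Rightarrow> (real^'q \<Rightarrow> real^'p \<Rightarrow> real) \<Rightarrow> 'w
               \<Rightarrow> real^'q \<Rightarrow> real^'p \<Rightarrow> real"
  assumes ab: "a < b" and t: "0 \<le> t" and \<beta>: "0 < \<beta>" and C: "0 < C"
    and \<alpha>: "\<And>n. 0 < \<alpha> n"
    and model: "\<And>n \<phi> k. (\<phi>, k) \<in> src_class a b t L \<beta> C \<Longrightarrow>
        prob_space (M n \<phi> k) \<and>
        (\<forall>w z. (\<lambda>\<omega>. Kh n \<phi> k \<omega> w z) \<in> borel_measurable (M n \<phi> k)) \<and>
        (AE \<omega> in M n \<phi> k. cont_kernel (cube a b) (cube a b) (Kh n \<phi> k \<omega>))"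
    and bnd: "\<exists>B. \<forall>n \<phi> k. (\<phi>, k) \<in> src_class a b t L \<beta> C \<longrightarrow>
        (\<integral>\<^sup>+\<omega>. (norm_2inf (cube a b) (cube a b) (\<lambda>w z. Kh n \<phi> k \<omega> w z - k w z))^2 \<partial>M n \<phi> k)
          \<le> ennreal B"
  shows "\<exists>K. \<forall>n \<phi> k. (\<phi>, k) \<in> src_class a b t L \<beta> C \<longrightarrow>
        (\<integral>\<^sup>+\<omega>. supn (cube a b)
             (\<lambda>z. reg_proj (cube a b) (cube a b) (Kh n \<phi> k \<omega>) (\<alpha> n) \<phi> z
                 - reg_proj (cube a b) (cube a b) k (\<alpha> n) \<phi> z) \<partial>M n \<phi> k)
        \<le> ennreal K * ennreal (sqrt (enn2real
             (\<integral>\<^sup>+\<omega>. (norm_2inf (cube a b) (cube a b) (\<lambda>w z. Kh n \<phi> k \<omega> w z - k w z))^2 \<partial>M n \<phi> k)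
             / \<alpha> n))"
proof -
  obtain B where B: "\<And>n \<phi> k. (\<phi>, k) \<in> src_class a b t L \<beta> C \<Longrightarrow>
        (\<integral>\<^sup>+\<omega>. (norm_2inf (cube a b) (cube a b) (\<lambda>w z. Kh n \<phi> k \<omega> w z - k w z))^2 \<partial>M n \<phi> k)
          \<le> ennreal B" using bnd by blast
  define B' where "B' = max B 0"
  define VP where "VP = measure lebesgue (cube a b :: (real^'p) set)"
  have VP: "0 < VP" unfolding VP_def by (rule cube_measure_pos[OF ab])
  define sV where "sV = sqrt VP"
  have sV: "0 < sV" using VP by (simp add: sV_def)
  define K\<phi> where "K\<phi> = (C^2 * VP) powr \<beta> * C"
  have K\<phi>: "0 < K\<phi>" using C VP by (simp add: K\<phi>_def)
  define K0 where "K0 = 3 * sV * K\<phi> * (C + 1) + sV * \<bar>L\<bar>"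
  have K0: "0 < K0" using sV K\<phi> C by (simp add: K0_def add_pos_nonneg)
  show ?thesis
  proof (intro exI[of _ "K0 * (1 + sqrt B')"] allI impI)
    fix n :: nat and \<phi> :: "real^'p \<Rightarrow> real" and k :: "real^'q \<Rightarrow> real^'p \<Rightarrow> real"
    assume cls: "(\<phi>, k) \<in> src_class a b t L \<beta> C"
    let ?PP = "cube a b :: (real^'p) set" and ?QQ = "cube a b :: (real^'q) set"
    have kc: "cont_kernel ?QQ ?PP k" and hol: "holder ?PP t L \<phi>"
      and kN: "norm_2inf ?QQ ?PP k \<le> ennreal C"
      using cls unfolding src_class_def by auto
    obtain \<psi> where \<psi>: "sqint ?QQ \<psi>" "L2norm ?QQ \<psi> \<le> C"
      and pw: "is_power_image ?PP (\<lambda>f. Tadj ?QQ k (Top ?PP k f)) \<beta> (Tadj ?QQ k \<psi>) \<phi>"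
      using cls unfolding src_class_def by auto
    interpret K: kctx a b k by unfold_locales (rule ab, rule kc)
    have Mp: "prob_space (M n \<phi> k)" and AEc: "AE \<omega> in M n \<phi> k. cont_kernel ?QQ ?PP (Kh n \<phi> k \<omega>)"
      using model[OF cls] by auto
    have \<phi>c: "continuous_on ?PP \<phi>" using hol unfolding holder_def by auto
    have \<phi>L: "\<forall>z\<in>?PP. \<bar>\<phi> z\<bar> \<le> L"
    proof -
      have "length ([] :: 'p list) \<le> nat \<lfloor>t\<rfloor>" by simp
      then have "\<forall>x\<in>?PP. \<bar>Dpar ?PP [] \<phi> x\<bar> \<le> L" using hol unfolding holder_def by blast
      then show ?thesis by simp
    qed
    have \<phi>s: "sqint ?PP \<phi>" by (rule continuous_sqint[OF K.PPc \<phi>c])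
    have src: "\<forall>u. sqint ?PP u \<longrightarrow> \<bar>ip ?PP \<phi> u\<bar> \<le> K\<phi> * L2norm ?QQ (Top ?PP k u)"
    proof (intro allI impI)
      fix u assume u: "sqint ?PP u"
      have "\<bar>ip ?PP \<phi> u\<bar> \<le> (C^2 * VP) powr \<beta> * L2norm ?QQ \<psi> * L2norm ?QQ (Top ?PP k u)"
        using K.source_bound[OF less_imp_le[OF C] kN \<beta> \<psi>(1) pw \<phi>s u] by (simp add: VP_def)
      also have "\<dots> \<le> (C^2 * VP) powr \<beta> * C * L2norm ?QQ (Top ?PP k u)"
        using \<psi>(2) by (intro mult_right_mono mult_left_mono) (simp_all add: L2norm_nonneg)
      finally show "\<bar>ip ?PP \<phi> u\<bar> \<le> K\<phi> * L2norm ?QQ (Top ?PP k u)" by (simp add: K\<phi>_def)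
    qed
    define \<delta> where "\<delta> = (\<lambda>\<omega>. norm_2inf ?QQ ?PP (\<lambda>w z. Kh n \<phi> k \<omega> w z - k w z))"
    define E where "E = (\<integral>\<^sup>+\<omega>. (\<delta> \<omega>)^2 \<partial>M n \<phi> k)"
    have EB: "E \<le> ennreal B'" using B[OF cls] unfolding E_def \<delta>_def B'_def
      by (rule order_trans) (simp add: ennreal_leI)
    then have Efin: "E < \<infinity>" using le_less_trans[OF EB ennreal_less_top] by simp
    obtain e where e: "E = ennreal e" "0 \<le> e" using Efin by (cases E) auto
    have eB: "e \<le> B'" using EB e B'_def by (simp add: ennreal_le_iff)
    have pt: "AE \<omega> in M n \<phi> k. supn ?PP (\<lambda>z. reg_proj ?PP ?QQ (Kh n \<phi> k \<omega>) (\<alpha> n) \<phi> z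
                 - reg_proj ?PP ?QQ k (\<alpha> n) \<phi> z) \<le> ennreal (K0 / sqrt (\<alpha> n)) * (\<delta> \<omega> + (\<delta> \<omega>)^2)"
      using AEc
    proof (rule AE_mp, intro AE_I2 impI)
      fix \<omega> assume khc: "cont_kernel ?QQ ?PP (Kh n \<phi> k \<omega>)"
      show "supn ?PP (\<lambda>z. reg_proj ?PP ?QQ (Kh n \<phi> k \<omega>) (\<alpha> n) \<phi> z - reg_proj ?PP ?QQ k (\<alpha> n) \<phi> z)
          \<le> ennreal (K0 / sqrt (\<alpha> n)) * (\<delta> \<omega> + (\<delta> \<omega>)^2)"
      proof (cases "\<delta> \<omega> = \<infinity>")
        case True
        have "0 < K0 / sqrt (\<alpha> n)" using K0 \<alpha>[of n] by simp
        then show ?thesis using True K0 \<alpha>[of n] by (simp add: ennreal_mult_top)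
      next
        case False
        then obtain d where d: "\<delta> \<omega> = ennreal d" "0 \<le> d" by (cases "\<delta> \<omega>") auto
        have dN: "norm_2inf ?QQ ?PP (\<lambda>w z. Kh n \<phi> k \<omega> w z - k w z) \<le> ennreal d"
          using d by (simp add: \<delta>_def)
        have "supn ?PP (\<lambda>z. reg_proj ?PP ?QQ (Kh n \<phi> k \<omega>) (\<alpha> n) \<phi> z - reg_proj ?PP ?QQ k (\<alpha> n) \<phi> z)
            \<le> ennreal (K0 * (d + d^2) / sqrt (\<alpha> n))"
        proof (rule supn_le)
          fix z assume z: "z \<in> ?PP"
          have "\<bar>reg_proj ?PP ?QQ (Kh n \<phi> k \<omega>) (\<alpha> n) \<phi> z - reg_proj ?PP ?QQ k (\<alpha> n) \<phi> z\<bar>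
              \<le> (3 * sV * K\<phi> * ((C + d) * d) + sV * L * d) / sqrt (\<alpha> n)"
            using det_bound[OF ab kc khc \<alpha>[of n] \<phi>c \<phi>L less_imp_le[OF C] kN less_imp_le[OF K\<phi>] src d(2) dN z]
            by (simp add: sV_def VP_def)
          also have "\<dots> \<le> K0 * (d + d^2) / sqrt (\<alpha> n)"
          proof (rule divide_right_mono)
            have "(C + d) * d \<le> (C + 1) * (d + d^2)"
              using C d(2) by (simp add: algebra_simps power2_eq_square mult_right_mono)
            then have 1: "3 * sV * K\<phi> * ((C + d) * d) \<le> 3 * sV * K\<phi> * ((C + 1) * (d + d^2))"
              using sV K\<phi> by (intro mult_left_mono) auto
            have "L * d \<le> \<bar>L\<bar> * (d + d^2)" using d(2)
              by (metis abs_ge_self abs_ge_zero add_increasing2 le_add_same_cancel1 mult_mono zero_le_power2 order_trans mult_right_mono)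
            then have 2: "sV * L * d \<le> sV * \<bar>L\<bar> * (d + d^2)"
              using sV by (simp add: mult.assoc mult_left_mono)
            show "3 * sV * K\<phi> * ((C + d) * d) + sV * L * d \<le> K0 * (d + d^2)"
              using 1 2 by (simp add: K0_def algebra_simps)
            show "0 \<le> sqrt (\<alpha> n)" using \<alpha>[of n] by simp
          qed
          finally show "\<bar>reg_proj ?PP ?QQ (Kh n \<phi> k \<omega>) (\<alpha> n) \<phi> z - reg_proj ?PP ?QQ k (\<alpha> n) \<phi> z\<bar>
              \<le> K0 * (d + d^2) / sqrt (\<alpha> n)" .
        qed
        also have "ennreal (K0 * (d + d^2) / sqrt (\<alpha> n)) = ennreal (K0 / sqrt (\<alpha> n)) * (\<delta> \<omega> + (\<delta> \<omega>)^2)"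
        proof -
          have X0: "0 \<le> K0 / sqrt (\<alpha> n)" using K0 \<alpha>[of n] by simp
          have Y0: "0 \<le> d + d^2" using d by simp
          have "K0 * (d + d^2) / sqrt (\<alpha> n) = K0 / sqrt (\<alpha> n) * (d + d^2)" by simp
          then show ?thesis using ennreal_mult[OF X0 Y0] ennreal_plus[of d "d^2"] d
            by (simp add: ennreal_power)
        qed
        finally show ?thesis .
      qed
    qed
    have "(\<integral>\<^sup>+\<omega>. supn ?PP (\<lambda>z. reg_proj ?PP ?QQ (Kh n \<phi> k \<omega>) (\<alpha> n) \<phi> z
                 - reg_proj ?PP ?QQ k (\<alpha> n) \<phi> z) \<partial>M n \<phi> k)
        \<le> (\<integral>\<^sup>+\<omega>. ennreal (K0 / sqrt (\<alpha> n)) * (\<delta> \<omega> + (\<delta> \<omega>)^2) \<partial>M n \<phi> k)"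
      by (rule nn_integral_mono_AE[OF pt])
    also have "\<dots> \<le> ennreal (K0 / sqrt (\<alpha> n)) * (ennreal (sqrt (enn2real E)) + E)"
      unfolding E_def by (rule lower_int_bound[OF Mp]) (use K0 \<alpha>[of n] Efin in \<open>auto simp: E_def\<close>)
    also have "\<dots> \<le> ennreal (K0 * (1 + sqrt B')) * ennreal (sqrt (e / \<alpha> n))"
      using final_arith[OF less_imp_le[OF K0] \<alpha>[of n] e(2) eB] e by simp
    finally show "(\<integral>\<^sup>+\<omega>. supn ?PP (\<lambda>z. reg_proj ?PP ?QQ (Kh n \<phi> k \<omega>) (\<alpha> n) \<phi> z
                 - reg_proj ?PP ?QQ k (\<alpha> n) \<phi> z) \<partial>M n \<phi> k)
        \<le> ennreal (K0 * (1 + sqrt B')) * ennreal (sqrt (enn2real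
             (\<integral>\<^sup>+\<omega>. (norm_2inf ?QQ ?PP (\<lambda>w z. Kh n \<phi> k \<omega> w z - k w z))^2 \<partial>M n \<phi> k) / \<alpha> n))"
      using e unfolding E_def \<delta>_def by simp
  qed
qed

end
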